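(* Consider the perturbed federated algorithm described in the context, with $\beta\in(0,1)$, and a round $t$ whose step size satisfies $\gamma_t\le1/L$. Assume that the bounded variance, bounded stochastic gradient norm, $L$-smoothness and lower-bounded objective assumptions hold. Then $$\frac1E\sum_{k=0}^{E-1}\mathbb{E}\|\nabla F(\overline{\mathbf{w}}_{t,k})\|^2\le\frac2{\gamma_tE}\,\mathbb{E}\big[F(\overline{\mathbf{w}}_{t,0})-F(\overline{\mathbf{w}}_{t+1,0})\big]+A,$$ where $$A=\gamma_tL\sigma^2\sum_ip_i^2+4\gamma_t^2L^2E^2G^2\Big[4+(1-\beta)^2+\mathbb{1}_{t\ge1}\frac{8\gamma_{t-1}^2}{\gamma_t^2}\Big(1-\frac1\beta\Big)^2\Big].$$
   Context: Setting: there are $C$ clients with local objectives $F_i:\mathbb{R}^D\to\mathbb{R}$. Similarity weights $p_{in}\ge0$ are symmetric, satisfy $p_{ii}=0$, and $\sum_{i,n}p_{in}=1$. Let $p_i=\sum_np_{in}>0$ and $F=\sum_ip_iF_i$. Algorithm, with parameter $\beta$, $E\ge1$ local steps and step sizes $\gamma_t$, all clients participating: - $\mathbf{u}^i_0=\overline{\mathbf{w}}_{0,0}$. - In round $t$, $\mathbf{w}^i_{t,0}=\overline{\mathbf{w}}_{t,0}$. For $k=0,\dots,E-1$, $\widetilde{\mathbf{w}}^i_{t,k}=\beta\mathbf{w}^i_{t,k}+(1-\beta)\mathbf{u}^i_t$ and $\mathbf{w}^i_{t,k+1}=\mathbf{w}^i_{t,k}-\gamma_tg_i(\widetilde{\mathbf{w}}^i_{t,k})$,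 with stochastic gradients $g_i$ of $F_i$ sampled independently across clients and steps given the past. - $\overline{\mathbf{w}}_{t,k}=\sum_ip_i\mathbf{w}^i_{t,k}$ and $\overline{\mathbf{w}}_{t+1,0}=\overline{\mathbf{w}}_{t,E}$. - For $t\ge1$, $\mathbf{u}^i_t=\frac1{p_i}\sum_np_{in}\mathbf{w}^n_{t-1,E}$. Assumptions: - Unbiasedness: $\mathbb{E}\,g_i(\widetilde{\mathbf{w}}^i_{t,k})=\nabla F_i(\widetilde{\mathbf{w}}^i_{t,k})$. - Variance: $\mathbb{E}\|g_i-\nabla F_i\|^2\le\sigma^2$ at these points. - Bounded second moment: $\mathbb{E}\|g_i(\widetilde{\mathbf{w}}^i_{t,k})\|^2\le G^2$. - Each $\nabla F_i$ is $L$-Lipschitz. - $F$ is bounded below by $f_{\inf}$. $\mathbb{E}$ is total expectation. *)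

theory Defs
  imports "HOL-Probability.Probability"
begin

definition pw :: "('c::finite \<Rightarrow> 'c \<Rightarrow> real) \<Rightarrow> 'c \<Rightarrow> real" where
  "pw p i = (\<Sum>n\<in>UNIV. p i n)"

text \<open>Local steps of one client in one round. g is the client's stochastic gradient
  oracle (point, noise sample), ys k the noise sample used at local step k,
  w the round's starting point, u the client's anchor u^i_t.
  lstep ... k = w^i_{t,k}.\<close>
fun lstep :: "('a::real_vector \<Rightarrow> 'n \<Rightarrow> 'a) \<Rightarrow> real \<Rightarrow> real \<Rightarrow> 'a \<Rightarrow> 'a \<Rightarrow> (nat \<Rightarrow> 'n) \<Rightarrow> nat \<Rightarrow> 'a" where
  "lstep g \<beta> \<gamma> w u ys 0 = w"
| "lstep g \<beta> \<gamma> w u ys (Suc k) =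
     lstep g \<beta> \<gamma> w u ys k - \<gamma> *\<^sub>R g (\<beta> *\<^sub>R lstep g \<beta> \<gamma> w u ys k + (1 - \<beta>) *\<^sub>R u) (ys k)"

text \<open>State at the start of round t: (wbar_{t,0}, (u^i_t)_i), for a realisation ys i t k of
  all noise samples.\<close>
fun fed_state :: "('c::finite \<Rightarrow> 'c \<Rightarrow> real) \<Rightarrow> ('c \<Rightarrow> 'a::real_vector \<Rightarrow> 'n \<Rightarrow> 'a) \<Rightarrow> real \<Rightarrow> nat
    \<Rightarrow> (nat \<Rightarrow> real) \<Rightarrow> 'a \<Rightarrow> ('c \<Rightarrow> nat \<Rightarrow> nat \<Rightarrow> 'n) \<Rightarrow> nat \<Rightarrow> 'a \<times> ('c \<Rightarrow> 'a)" where
  "fed_state p g \<beta> E \<gamma> w0 ys 0 = (w0, (\<lambda>i. w0))"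
| "fed_state p g \<beta> E \<gamma> w0 ys (Suc t) =
     (let (w, u) = fed_state p g \<beta> E \<gamma> w0 ys t;
          fin = (\<lambda>i. lstep (g i) \<beta> (\<gamma> t) w (u i) (ys i t) E)
      in ((\<Sum>i\<in>UNIV. pw p i *\<^sub>R fin i), (\<lambda>i. (1 / pw p i) *\<^sub>R (\<Sum>n\<in>UNIV. p i n *\<^sub>R fin n))))"

definition fed_w :: "('c::finite \<Rightarrow> 'c \<Rightarrow> real) \<Rightarrow> ('c \<Rightarrow> 'a::real_vector \<Rightarrow> 'n \<Rightarrow> 'a) \<Rightarrow> real \<Rightarrow> nat
    \<Rightarrow> (nat \<Rightarrow> real) \<Rightarrow> 'a \<Rightarrow> ('c \<Rightarrow> nat \<Rightarrow> nat \<Rightarrow> 'n) \<Rightarrow> nat \<Rightarrow> nat \<Rightarrow> 'c \<Rightarrow> 'a" where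
  "fed_w p g \<beta> E \<gamma> w0 ys t k i =
     lstep (g i) \<beta> (\<gamma> t) (fst (fed_state p g \<beta> E \<gamma> w0 ys t)) (snd (fed_state p g \<beta> E \<gamma> w0 ys t) i) (ys i t) k"

definition fed_wt :: "('c::finite \<Rightarrow> 'c \<Rightarrow> real) \<Rightarrow> ('c \<Rightarrow> 'a::real_vector \<Rightarrow> 'n \<Rightarrow> 'a) \<Rightarrow> real \<Rightarrow> nat
    \<Rightarrow> (nat \<Rightarrow> real) \<Rightarrow> 'a \<Rightarrow> ('c \<Rightarrow> nat \<Rightarrow> nat \<Rightarrow> 'n) \<Rightarrow> nat \<Rightarrow> nat \<Rightarrow> 'c \<Rightarrow> 'a" where
  "fed_wt p g \<beta> E \<gamma> w0 ys t k i =
     \<beta> *\<^sub>R fed_w p g \<beta> E \<gamma> w0 ys t k i + (1 - \<beta>) *\<^sub>R snd (fed_state p g \<beta> E \<gamma> w0 ys t) i"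

definition fed_wbar :: "('c::finite \<Rightarrow> 'c \<Rightarrow> real) \<Rightarrow> ('c \<Rightarrow> 'a::real_vector \<Rightarrow> 'n \<Rightarrow> 'a) \<Rightarrow> real \<Rightarrow> nat
    \<Rightarrow> (nat \<Rightarrow> real) \<Rightarrow> 'a \<Rightarrow> ('c \<Rightarrow> nat \<Rightarrow> nat \<Rightarrow> 'n) \<Rightarrow> nat \<Rightarrow> nat \<Rightarrow> 'a" where
  "fed_wbar p g \<beta> E \<gamma> w0 ys t k = (\<Sum>i\<in>UNIV. pw p i *\<^sub>R fed_w p g \<beta> E \<gamma> w0 ys t k i)"

end

theory Submission
  imports Defs
begin

lemma wsum_sq_le:
  fixes v :: "'i \<Rightarrow> 'a::real_inner" and q :: "'i \<Rightarrow> real"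
  assumes fin: "finite S" and q: "\<And>i. i \<in> S \<Longrightarrow> 0 \<le> q i" and s1: "sum q S = 1"
  shows "(norm (\<Sum>i\<in>S. q i *\<^sub>R v i))\<^sup>2 \<le> (\<Sum>i\<in>S. q i * (norm (v i))\<^sup>2)"
proof -
  let ?m = "\<Sum>i\<in>S. q i * norm (v i)"
  have "norm (\<Sum>i\<in>S. q i *\<^sub>R v i) \<le> (\<Sum>i\<in>S. norm (q i *\<^sub>R v i))" by (rule norm_sum)
  also have "\<dots> = ?m" using q by (intro sum.cong) auto
  finally have n1: "norm (\<Sum>i\<in>S. q i *\<^sub>R v i) \<le> ?m" .
  have "0 \<le> (\<Sum>i\<in>S. q i * (norm (v i) - ?m)\<^sup>2)" using q by (intro sum_nonneg) auto
  also have "\<dots> = (\<Sum>i\<in>S. q i * (norm (v i))\<^sup>2 - 2 * ?m * (q i * norm (v i)) + ?m\<^sup>2 * q i)"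
    by (intro sum.cong refl) (simp add: power2_eq_square algebra_simps)
  also have "\<dots> = (\<Sum>i\<in>S. q i * (norm (v i))\<^sup>2) - 2 * ?m * ?m + ?m\<^sup>2 * sum q S"
    by (simp only: sum.distrib sum_subtractf sum_distrib_left[symmetric])
  finally have "?m\<^sup>2 \<le> (\<Sum>i\<in>S. q i * (norm (v i))\<^sup>2)" using s1 by (simp add: power2_eq_square)
  moreover have "(norm (\<Sum>i\<in>S. q i *\<^sub>R v i))\<^sup>2 \<le> ?m\<^sup>2"
    using n1 by (intro power_mono) auto
  ultimately show ?thesis by linarith
qed

lemma sum_sq_le:
  fixes v :: "nat \<Rightarrow> 'a::real_inner"
  shows "(norm (\<Sum>j<k. v j))\<^sup>2 \<le> real k * (\<Sum>j<k. (norm (v j))\<^sup>2)"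
proof (cases "k = 0")
  case True then show ?thesis by simp
next
  case False
  have "(norm (\<Sum>j<k. (1 / real k) *\<^sub>R v j))\<^sup>2 \<le> (\<Sum>j<k. (1 / real k) * (norm (v j))\<^sup>2)"
    using False by (intro wsum_sq_le) auto
  moreover have "(\<Sum>j<k. (1 / real k) *\<^sub>R v j) = (1 / real k) *\<^sub>R (\<Sum>j<k. v j)"
    by (simp add: scaleR_sum_right)
  moreover have "(\<Sum>j<k. (1 / real k) * (norm (v j))\<^sup>2) = (1 / real k) * (\<Sum>j<k. (norm (v j))\<^sup>2)"
    by (simp add: sum_distrib_left)
  ultimately have "(norm ((1 / real k) *\<^sub>R (\<Sum>j<k. v j)))\<^sup>2 \<le> (1 / real k) * (\<Sum>j<k. (norm (v j))\<^sup>2)"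
    by simp
  moreover have "(norm ((1 / real k) *\<^sub>R (\<Sum>j<k. v j)))\<^sup>2 = (norm (\<Sum>j<k. v j))\<^sup>2 / (real k)\<^sup>2"
    by (simp add: power_divide)
  ultimately have "(norm (\<Sum>j<k. v j))\<^sup>2 / (real k)\<^sup>2 \<le> (\<Sum>j<k. (norm (v j))\<^sup>2) / real k"
    by simp
  then show ?thesis using False by (simp add: field_simps power2_eq_square)
qed

lemma sq3:
  fixes x y z :: "'a::real_inner"
  shows "(norm (x + y + z))\<^sup>2 \<le> 3 * ((norm x)\<^sup>2 + (norm y)\<^sup>2 + (norm z)\<^sup>2)"
proof -
  have "(norm (x + y + z))\<^sup>2 \<le> (norm x + norm y + norm z)\<^sup>2"
    by (intro power_mono) (auto intro: order_trans[OF norm_triangle_ineq] add_mono)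
  also have "\<dots> \<le> 3 * ((norm x)\<^sup>2 + (norm y)\<^sup>2 + (norm z)\<^sup>2)"
  proof -
    have e: "(norm x + norm y + norm z)\<^sup>2 + ((norm x - norm y)\<^sup>2 + (norm y - norm z)\<^sup>2 + (norm x - norm z)\<^sup>2)
       = 3 * ((norm x)\<^sup>2 + (norm y)\<^sup>2 + (norm z)\<^sup>2)"
      by (simp add: power2_eq_square algebra_simps)
    have "0 \<le> (norm x - norm y)\<^sup>2 + (norm y - norm z)\<^sup>2 + (norm x - norm z)\<^sup>2" by simp
    with e show ?thesis by linarith
  qed
  finally show ?thesis .
qed

lemma sq2:
  fixes x y :: "'a::real_inner"
  shows "(norm (x + y))\<^sup>2 \<le> 2 * ((norm x)\<^sup>2 + (norm y)\<^sup>2)"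
proof -
  have "(norm (x + y))\<^sup>2 \<le> (norm x + norm y)\<^sup>2"
    by (intro power_mono norm_triangle_ineq) auto
  also have "\<dots> \<le> 2 * ((norm x)\<^sup>2 + (norm y)\<^sup>2)"
    using zero_le_square[of "norm x - norm y"] by (simp add: power2_eq_square algebra_simps)
  finally show ?thesis .
qed

lemma descent_two_sided:
  fixes f :: "'a::real_inner \<Rightarrow> real"
  assumes d: "\<And>x. (f has_derivative (\<lambda>h. gf x \<bullet> h)) (at x)"
    and lip: "\<And>x y. norm (gf x - gf y) \<le> L * norm (x - y)"
  shows "\<bar>f y - f x - gf x \<bullet> (y - x)\<bar> \<le> L / 2 * (norm (y - x))\<^sup>2"
proof -
  define d where "d = y - x"
  define \<phi> where "\<phi> s = f (x + s *\<^sub>R d) - s * (gf x \<bullet> d)" for s :: real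
  have D: "(\<phi> has_real_derivative ((gf (x + s *\<^sub>R d) - gf x) \<bullet> d)) (at s)" for s
  proof -
    have "((\<lambda>s. x + s *\<^sub>R d) has_derivative (\<lambda>h. h *\<^sub>R d)) (at s)"
      by (auto intro!: derivative_eq_intros)
    from has_derivative_compose[OF this d]
    have "((\<lambda>s. f (x + s *\<^sub>R d)) has_derivative (\<lambda>h. gf (x + s *\<^sub>R d) \<bullet> (h *\<^sub>R d))) (at s)" .
    then have "((\<lambda>s. f (x + s *\<^sub>R d) - s * (gf x \<bullet> d)) has_derivative
        (\<lambda>h. gf (x + s *\<^sub>R d) \<bullet> (h *\<^sub>R d) - h * (gf x \<bullet> d))) (at s)"
      by (auto intro!: derivative_eq_intros)
    moreover have "(\<lambda>h. gf (x + s *\<^sub>R d) \<bullet> (h *\<^sub>R d) - h * (gf x \<bullet> d)) = (\<lambda>h. ((gf (x + s *\<^sub>R d) - gf x) \<bullet> d) * h)"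
      by (auto simp: inner_diff_left algebra_simps)
    ultimately show ?thesis unfolding has_field_derivative_def \<phi>_def by simp
  qed
  have bnd: "\<bar>(gf (x + s *\<^sub>R d) - gf x) \<bullet> d\<bar> \<le> L * s * (norm d)\<^sup>2" if "0 \<le> s" for s
  proof -
    have "\<bar>(gf (x + s *\<^sub>R d) - gf x) \<bullet> d\<bar> \<le> norm (gf (x + s *\<^sub>R d) - gf x) * norm d"
      by (rule Cauchy_Schwarz_ineq2)
    also have "\<dots> \<le> (L * norm (s *\<^sub>R d)) * norm d"
      using lip[of "x + s *\<^sub>R d" x] by (intro mult_right_mono) auto
    finally show ?thesis using that by (simp add: power2_eq_square)
  qed
  define \<psi>1 where "\<psi>1 s = \<phi> s - L / 2 * s\<^sup>2 * (norm d)\<^sup>2" for s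
  define \<psi>2 where "\<psi>2 s = \<phi> s + L / 2 * s\<^sup>2 * (norm d)\<^sup>2" for s
  have "\<psi>1 1 \<le> \<psi>1 0"
  proof (rule DERIV_nonpos_imp_nonincreasing[of 0 1 \<psi>1])
    fix s :: real assume s: "0 \<le> s" "s \<le> 1"
    have "(\<psi>1 has_real_derivative ((gf (x + s *\<^sub>R d) - gf x) \<bullet> d - L * s * (norm d)\<^sup>2)) (at s)"
      unfolding \<psi>1_def by (rule derivative_eq_intros D refl | simp)+
    then show "\<exists>y. DERIV \<psi>1 s :> y \<and> y \<le> 0" using bnd[OF s(1)] by auto
  qed simp
  moreover have "\<psi>2 0 \<le> \<psi>2 1"
  proof (rule DERIV_nonneg_imp_nondecreasing[of 0 1 \<psi>2])
    fix s :: real assume s: "0 \<le> s" "s \<le> 1"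
    have "(\<psi>2 has_real_derivative ((gf (x + s *\<^sub>R d) - gf x) \<bullet> d + L * s * (norm d)\<^sup>2)) (at s)"
      unfolding \<psi>2_def by (rule derivative_eq_intros D refl | simp)+
    then show "\<exists>y. DERIV \<psi>2 s :> y \<and> y \<ge> 0" using bnd[OF s(1)] by auto
  qed simp
  ultimately show ?thesis unfolding \<psi>1_def \<psi>2_def \<phi>_def d_def by (simp add: inner_diff_right split: abs_split)
qed


lemma aux1: "(a::real) \<ge> 0 \<Longrightarrow> a \<le> 1 + a\<^sup>2"
proof -
  have "(a - 1/2)\<^sup>2 = a\<^sup>2 - a + 1/4" by (simp add: power2_eq_square algebra_simps)
  moreover have "0 \<le> (a - 1/2)\<^sup>2" by simp
  ultimately show ?thesis by linarith
qed

lemma aux2: "(a::real) \<ge> 0 \<Longrightarrow> b \<ge> 0 \<Longrightarrow> a * b \<le> a\<^sup>2 + b\<^sup>2"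
proof -
  assume "a \<ge> 0" "b \<ge> 0"
  then have "0 \<le> a * b" by simp
  moreover have "(a - b)\<^sup>2 = a\<^sup>2 - 2 * (a * b) + b\<^sup>2" by (simp add: power2_eq_square algebra_simps)
  moreover have "0 \<le> (a - b)\<^sup>2" by simp
  ultimately show ?thesis by linarith
qed

lemma fst_bm: "fst \<in> borel_measurable (borel :: ('x::topological_space \<times> 'y::topological_space) measure)"
  by (intro borel_measurable_continuous_onI continuous_intros)

lemma snd_bm: "snd \<in> borel_measurable (borel :: ('x::topological_space \<times> 'y::topological_space) measure)"
  by (intro borel_measurable_continuous_onI continuous_intros)

context prob_space begin

lemma L2_L1:
  fixes f :: "'a \<Rightarrow> 'x::{banach,second_countable_topology}"
  assumes m: "f \<in> borel_measurable M" and i: "integrable M (\<lambda>\<omega>. (norm (f \<omega>))\<^sup>2)"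
  shows "integrable M f"
proof (rule Bochner_Integration.integrable_bound[where f="\<lambda>\<omega>. 1 + (norm (f \<omega>))\<^sup>2"])
  show "integrable M (\<lambda>\<omega>. 1 + (norm (f \<omega>))\<^sup>2)" using i by simp
  show "f \<in> borel_measurable M" by fact
  show "AE x in M. norm (f x) \<le> norm (1 + (norm (f x))\<^sup>2)"
  proof (intro AE_I2)
    fix x
    have "norm (f x) \<le> 1 + (norm (f x))\<^sup>2"
      by (rule aux1) simp
    then show "norm (f x) \<le> norm (1 + (norm (f x))\<^sup>2)" by simp
  qed
qed

lemma L2_inner:
  fixes f g :: "'a \<Rightarrow> 'x::{real_inner,banach,second_countable_topology}"
  assumes mf: "f \<in> borel_measurable M" and f: "integrable M (\<lambda>\<omega>. (norm (f \<omega>))\<^sup>2)"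
    and mg: "g \<in> borel_measurable M" and g: "integrable M (\<lambda>\<omega>. (norm (g \<omega>))\<^sup>2)"
  shows "integrable M (\<lambda>\<omega>. f \<omega> \<bullet> g \<omega>)"
proof (rule Bochner_Integration.integrable_bound[where f="\<lambda>\<omega>. (norm (f \<omega>))\<^sup>2 + (norm (g \<omega>))\<^sup>2"])
  show "integrable M (\<lambda>\<omega>. (norm (f \<omega>))\<^sup>2 + (norm (g \<omega>))\<^sup>2)" using f g by simp
  show "(\<lambda>\<omega>. f \<omega> \<bullet> g \<omega>) \<in> borel_measurable M" using mf mg by measurable
  show "AE x in M. norm (f x \<bullet> g x) \<le> norm ((norm (f x))\<^sup>2 + (norm (g x))\<^sup>2)"
  proof (intro AE_I2)
    fix x
    have "\<bar>f x \<bullet> g x\<bar> \<le> norm (f x) * norm (g x)" by (rule Cauchy_Schwarz_ineq2)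
    also have "\<dots> \<le> (norm (f x))\<^sup>2 + (norm (g x))\<^sup>2"
      by (rule aux2) simp_all
    finally show "norm (f x \<bullet> g x) \<le> norm ((norm (f x))\<^sup>2 + (norm (g x))\<^sup>2)" by simp
  qed
qed

lemma L2_add:
  fixes f g :: "'a \<Rightarrow> 'x::{real_inner,banach,second_countable_topology}"
  assumes mf: "f \<in> borel_measurable M" and f: "integrable M (\<lambda>\<omega>. (norm (f \<omega>))\<^sup>2)"
    and mg: "g \<in> borel_measurable M" and g: "integrable M (\<lambda>\<omega>. (norm (g \<omega>))\<^sup>2)"
  shows "integrable M (\<lambda>\<omega>. (norm (f \<omega> + g \<omega>))\<^sup>2)"
proof (rule Bochner_Integration.integrable_bound[where f="\<lambda>\<omega>. 2 * ((norm (f \<omega>))\<^sup>2 + (norm (g \<omega>))\<^sup>2)"])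
  show "integrable M (\<lambda>\<omega>. 2 * ((norm (f \<omega>))\<^sup>2 + (norm (g \<omega>))\<^sup>2))" using f g by simp
  show "(\<lambda>\<omega>. (norm (f \<omega> + g \<omega>))\<^sup>2) \<in> borel_measurable M" using mf mg by measurable
  show "AE x in M. norm ((norm (f x + g x))\<^sup>2) \<le> norm (2 * ((norm (f x))\<^sup>2 + (norm (g x))\<^sup>2))"
    using sq2 by (intro AE_I2) simp
qed

lemma L2_scale:
  fixes f :: "'a \<Rightarrow> 'x::{real_inner,banach,second_countable_topology}"
  assumes f: "integrable M (\<lambda>\<omega>. (norm (f \<omega>))\<^sup>2)"
  shows "integrable M (\<lambda>\<omega>. (norm (c *\<^sub>R f \<omega>))\<^sup>2)"
  using integrable_mult_left[OF f, of "c\<^sup>2"] by (simp add: power_mult_distrib)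

lemma L2_const: "integrable M (\<lambda>\<omega>. (norm (c::'x::real_normed_vector))\<^sup>2)"
  by simp

lemma core:
  fixes h :: "'v::euclidean_space \<Rightarrow> 'n \<Rightarrow> 'v" and gF :: "'v \<Rightarrow> 'v"
    and X1 X2 :: "'a \<Rightarrow> 'v" and Y :: "'a \<Rightarrow> 'n"
  assumes Y: "Y \<in> measurable M N"
    and X1: "X1 \<in> borel_measurable M" and X2: "X2 \<in> borel_measurable M"
    and h: "(\<lambda>(x, y). h x y) \<in> borel_measurable (borel \<Otimes>\<^sub>M N)"
    and gF: "gF \<in> borel_measurable borel"
    and ind: "\<And>A B. A \<in> sets (borel :: ('v \<times> 'v) measure) \<Longrightarrow> B \<in> sets N \<Longrightarrow>
       prob (((\<lambda>\<omega>. (X1 \<omega>, X2 \<omega>)) -` A \<inter> space M) \<inter> (Y -` B \<inter> space M))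
        = prob ((\<lambda>\<omega>. (X1 \<omega>, X2 \<omega>)) -` A \<inter> space M) * prob (Y -` B \<inter> space M)"
    and unb: "AE \<omega> in M. (\<integral>y. h (X1 \<omega>) y \<partial>(distr M N Y)) = gF (X1 \<omega>)"
    and ih: "integrable M (\<lambda>\<omega>. (norm (h (X1 \<omega>) (Y \<omega>)))\<^sup>2)"
    and i2: "integrable M (\<lambda>\<omega>. (norm (X2 \<omega>))\<^sup>2)"
  shows "(\<integral>\<omega>. h (X1 \<omega>) (Y \<omega>) \<bullet> X2 \<omega> \<partial>M) = (\<integral>\<omega>. gF (X1 \<omega>) \<bullet> X2 \<omega> \<partial>M)"
proof -
  define X where "X \<omega> = (X1 \<omega>, X2 \<omega>)" for \<omega>
  have Xm: "X \<in> borel_measurable M" unfolding X_def using X1 X2 by measurable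
  define Px where "Px = distr M borel X"
  define Py where "Py = distr M N Y"
  interpret Px: prob_space Px unfolding Px_def using Xm by (rule prob_space_distr)
  interpret Py: prob_space Py unfolding Py_def using Y by (rule prob_space_distr)
  interpret P: pair_prob_space Px Py by unfold_locales
  have XYm: "(\<lambda>\<omega>. (X \<omega>, Y \<omega>)) \<in> measurable M (borel \<Otimes>\<^sub>M N)"
    using Xm Y by measurable
  have joint: "Px \<Otimes>\<^sub>M Py = distr M (borel \<Otimes>\<^sub>M N) (\<lambda>\<omega>. (X \<omega>, Y \<omega>))"
  proof (rule pair_measure_eqI)
    show "sigma_finite_measure Px" ..
    show "sigma_finite_measure Py" ..
    show "sets (Px \<Otimes>\<^sub>M Py) = sets (distr M (borel \<Otimes>\<^sub>M N) (\<lambda>\<omega>. (X \<omega>, Y \<omega>)))"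
      unfolding Px_def Py_def by (simp cong: sets_pair_measure_cong)
    fix A B assume A: "A \<in> sets Px" and B: "B \<in> sets Py"
    then have A': "A \<in> sets borel" and B': "B \<in> sets N" unfolding Px_def Py_def by auto
    have "emeasure (distr M (borel \<Otimes>\<^sub>M N) (\<lambda>\<omega>. (X \<omega>, Y \<omega>))) (A \<times> B)
        = emeasure M ((\<lambda>x. (X x, Y x)) -` (A \<times> B) \<inter> space M)"
      using A' B' by (intro emeasure_distr[OF XYm]) auto
    also have "(\<lambda>x. (X x, Y x)) -` (A \<times> B) \<inter> space M = (X -` A \<inter> space M) \<inter> (Y -` B \<inter> space M)"
      by auto
    also have "emeasure M ((X -` A \<inter> space M) \<inter> (Y -` B \<inter> space M)) = emeasure M (X -` A \<inter> space M) * emeasure M (Y -` B \<inter> space M)"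
      using ind[OF A' B'] unfolding X_def[abs_def]
      by (simp add: emeasure_eq_measure measure_nonneg ennreal_mult)
    also have "\<dots> = emeasure Px A * emeasure Py B"
      using Xm Y A' B' unfolding Px_def Py_def by (simp add: emeasure_distr)
    finally show "emeasure Px A * emeasure Py B = emeasure (distr M (borel \<Otimes>\<^sub>M N) (\<lambda>\<omega>. (X \<omega>, Y \<omega>))) (A \<times> B)" by simp
  qed
  have sPx: "sets Px = sets borel" unfolding Px_def by simp
  have sPy: "sets Py = sets N" unfolding Py_def by simp
  have sP: "sets (Px \<Otimes>\<^sub>M Py) = sets (borel \<Otimes>\<^sub>M N)"
    by (rule sets_pair_measure_cong[OF sPx sPy])
  have eqv: "measurable (Px \<Otimes>\<^sub>M Py) (borel :: 'v measure) = measurable (borel \<Otimes>\<^sub>M N) borel"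
    by (rule measurable_cong_sets[OF sP refl])
  have eqr: "measurable (Px \<Otimes>\<^sub>M Py) (borel :: real measure) = measurable (borel \<Otimes>\<^sub>M N) borel"
    by (rule measurable_cong_sets[OF sP refl])
  have eqv2: "measurable (borel \<Otimes>\<^sub>M Py) (borel :: 'v measure) = measurable ((borel :: ('v \<times> 'v) measure) \<Otimes>\<^sub>M N) borel"
    by (rule measurable_cong_sets[OF sets_pair_measure_cong[OF refl sPy] refl])
  have eqs: "measurable Px (borel :: 'v measure) = measurable borel borel"
    by (rule measurable_cong_sets[OF sPx refl])
  have hm[measurable]: "(\<lambda>(x, y). h x y) \<in> borel_measurable (borel \<Otimes>\<^sub>M N)" by fact
  define f where "f z = h (fst (fst z)) (snd z) \<bullet> snd (fst z)" for z :: "('v \<times> 'v) \<times> 'n"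
  define fh where "fh z = h (fst (fst z)) (snd z)" for z :: "('v \<times> 'v) \<times> 'n"
  have fhm: "fh \<in> borel_measurable (borel \<Otimes>\<^sub>M N)"
  proof -
    have "(\<lambda>z. fst (fst z)) \<in> borel_measurable (borel \<Otimes>\<^sub>M N)"
      using measurable_compose[OF measurable_fst[of borel N] fst_bm] by (simp add: comp_def)
    then have "(\<lambda>z. (fst (fst z), snd z)) \<in> measurable (borel \<Otimes>\<^sub>M N) (borel \<Otimes>\<^sub>M N)"
      by (intro measurable_Pair measurable_snd)
    from measurable_compose[OF this h] show ?thesis unfolding fh_def by (simp add: case_prod_beta)
  qed
  have fm: "f \<in> borel_measurable (borel \<Otimes>\<^sub>M N)"
  proof -
    have "(\<lambda>z. snd (fst z)) \<in> borel_measurable (borel \<Otimes>\<^sub>M N)"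
      using measurable_compose[OF measurable_fst[of borel N] snd_bm] by (simp add: comp_def)
    with fhm show ?thesis unfolding f_def fh_def by measurable
  qed
  have hXY: "(\<lambda>\<omega>. h (X1 \<omega>) (Y \<omega>)) \<in> borel_measurable M"
    using measurable_compose[OF XYm fhm] unfolding fh_def X_def by simp
  have int_f: "integrable (Px \<Otimes>\<^sub>M Py) f"
  proof -
    have "integrable M (\<lambda>\<omega>. h (X1 \<omega>) (Y \<omega>) \<bullet> X2 \<omega>)"
      by (rule L2_inner[OF hXY ih X2 i2])
    then have "integrable M (\<lambda>\<omega>. f (X \<omega>, Y \<omega>))" unfolding f_def X_def by simp
    then show ?thesis unfolding joint using integrable_distr_eq[OF XYm fm] by simp
  qed
  have int_fh: "integrable (Px \<Otimes>\<^sub>M Py) fh"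
  proof -
    have "integrable M (\<lambda>\<omega>. h (X1 \<omega>) (Y \<omega>))" by (rule L2_L1[OF hXY ih])
    then have "integrable M (\<lambda>\<omega>. fh (X \<omega>, Y \<omega>))" unfolding fh_def X_def by simp
    then show ?thesis unfolding joint using integrable_distr_eq[OF XYm fhm] by simp
  qed
  have "(\<integral>\<omega>. h (X1 \<omega>) (Y \<omega>) \<bullet> X2 \<omega> \<partial>M) = (\<integral>\<omega>. f (X \<omega>, Y \<omega>) \<partial>M)"
    unfolding f_def X_def by simp
  also have "\<dots> = integral\<^sup>L (Px \<Otimes>\<^sub>M Py) f"
    unfolding joint by (rule integral_distr[OF XYm fm, symmetric])
  also have "\<dots> = (\<integral>x. (\<integral>y. f (x, y) \<partial>Py) \<partial>Px)"
    by (rule P.integral_fst'[OF int_f, symmetric])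
  also have "\<dots> = (\<integral>x. (\<integral>y. h (fst x) y \<partial>Py) \<bullet> snd x \<partial>Px)"
  proof (rule integral_cong_AE)
    have fm': "f \<in> borel_measurable (Px \<Otimes>\<^sub>M Py)" using fm eqr by simp
    show "(\<lambda>x. \<integral>y. f (x, y) \<partial>Py) \<in> borel_measurable Px"
      using Py.borel_measurable_lebesgue_integral[of "\<lambda>x y. f (x, y)" Px] fm' by simp
    have fhm': "(\<lambda>(x::'v\<times>'v, y). h (fst x) y) \<in> borel_measurable (Px \<Otimes>\<^sub>M Py)"
      using fhm eqv unfolding fh_def by (simp add: case_prod_beta)
    have "(\<lambda>x. \<integral>y. h (fst x) y \<partial>Py) \<in> borel_measurable Px"
      using Py.borel_measurable_lebesgue_integral[OF fhm'] by simp
    moreover have "snd \<in> borel_measurable Px" using eqs snd_bm by simp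
    ultimately show "(\<lambda>x. (\<integral>y. h (fst x) y \<partial>Py) \<bullet> snd x) \<in> borel_measurable Px" by measurable
    show "AE x in Px. (\<integral>y. f (x, y) \<partial>Py) = (\<integral>y. h (fst x) y \<partial>Py) \<bullet> snd x"
      using P.AE_integrable_fst'[OF int_fh]
    proof (rule AE_mp, intro AE_I2 impI)
      fix x assume "integrable Py (\<lambda>y. fh (x, y))"
      then have "integrable Py (\<lambda>y. h (fst x) y)" unfolding fh_def by simp
      then show "(\<integral>y. f (x, y) \<partial>Py) = (\<integral>y. h (fst x) y \<partial>Py) \<bullet> snd x"
        unfolding f_def by simp
    qed
  qed
  also have "\<dots> = (\<integral>\<omega>. (\<integral>y. h (fst (X \<omega>)) y \<partial>Py) \<bullet> snd (X \<omega>) \<partial>M)"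
  proof -
    have fhm': "(\<lambda>(x::'v\<times>'v, y). h (fst x) y) \<in> borel_measurable (borel \<Otimes>\<^sub>M Py)"
    proof -
      have "(\<lambda>(x, y). h (fst x) y) = fh" unfolding fh_def by (auto simp: fun_eq_iff)
      moreover have "fh \<in> borel_measurable (borel \<Otimes>\<^sub>M Py)" using fhm eqv2 by simp
      ultimately show ?thesis by simp
    qed
    have "(\<lambda>x::'v\<times>'v. \<integral>y. h (fst x) y \<partial>Py) \<in> borel_measurable borel"
      using Py.borel_measurable_lebesgue_integral[OF fhm'] by simp
    then have "(\<lambda>x::'v\<times>'v. (\<integral>y. h (fst x) y \<partial>Py) \<bullet> snd x) \<in> borel_measurable borel"
      using borel_measurable_inner[OF _ snd_bm] by blast
    then show ?thesis unfolding Px_def by (rule integral_distr[OF Xm])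
  qed
  also have "\<dots> = (\<integral>\<omega>. gF (X1 \<omega>) \<bullet> X2 \<omega> \<partial>M)"
  proof (rule integral_cong_AE)
    have fhm': "(\<lambda>(x::'v\<times>'v, y). h (fst x) y) \<in> borel_measurable (borel \<Otimes>\<^sub>M Py)"
    proof -
      have "(\<lambda>(x, y). h (fst x) y) = fh" unfolding fh_def by (auto simp: fun_eq_iff)
      moreover have "fh \<in> borel_measurable (borel \<Otimes>\<^sub>M Py)" using fhm eqv2 by simp
      ultimately show ?thesis by simp
    qed
    have "(\<lambda>x::'v\<times>'v. \<integral>y. h (fst x) y \<partial>Py) \<in> borel_measurable borel"
      using Py.borel_measurable_lebesgue_integral[OF fhm'] by simp
    then have "(\<lambda>x::'v\<times>'v. (\<integral>y. h (fst x) y \<partial>Py) \<bullet> snd x) \<in> borel_measurable borel"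
      using borel_measurable_inner[OF _ snd_bm] by blast
    from measurable_compose[OF Xm this]
    show "(\<lambda>\<omega>. (\<integral>y. h (fst (X \<omega>)) y \<partial>Py) \<bullet> snd (X \<omega>)) \<in> borel_measurable M" by simp
    show "(\<lambda>\<omega>. gF (X1 \<omega>) \<bullet> X2 \<omega>) \<in> borel_measurable M"
      using measurable_compose[OF X1 gF] X2 by measurable
    show "AE \<omega> in M. (\<integral>y. h (fst (X \<omega>)) y \<partial>Py) \<bullet> snd (X \<omega>) = gF (X1 \<omega>) \<bullet> X2 \<omega>"
      using unb unfolding X_def Py_def by (rule AE_mp) (intro AE_I2 impI, simp)
  qed
  finally show ?thesis .
qed

end


locale fedl = prob_space M for M :: "'b measure" +
  fixes N :: "'n measure" and p :: "'c::finite \<Rightarrow> 'c \<Rightarrow> real"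
    and Fl :: "'c \<Rightarrow> 'a::euclidean_space \<Rightarrow> real"
    and gradF :: "'c \<Rightarrow> 'a \<Rightarrow> 'a"
    and g :: "'c \<Rightarrow> 'a \<Rightarrow> 'n \<Rightarrow> 'a"
    and \<xi> :: "'c \<Rightarrow> nat \<Rightarrow> nat \<Rightarrow> 'b \<Rightarrow> 'n"
    and w0 :: 'a
    and \<beta> L \<sigma> Gb :: real
    and E :: nat and \<gamma> :: "nat \<Rightarrow> real"
  assumes p_nonneg: "\<And>i n. 0 \<le> p i n"
    and p_sum: "(\<Sum>i\<in>UNIV. \<Sum>n\<in>UNIV. p i n) = 1"
    and pw_pos: "\<And>i. 0 < pw p i"
    and beta: "0 < \<beta>" "\<beta> < 1"
    and E_pos: "1 \<le> E"
    and gamma_pos: "\<And>s. 0 < \<gamma> s"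
    and L_pos: "0 < L"
    and grad: "\<And>i x. (Fl i has_derivative (\<lambda>h. gradF i x \<bullet> h)) (at x)"
    and smooth: "\<And>i x y. norm (gradF i x - gradF i y) \<le> L * norm (x - y)"
    and \<xi>_meas: "\<And>i s k. \<xi> i s k \<in> measurable M N"
    and g_meas: "\<And>i. (\<lambda>(x, y). g i x y) \<in> borel_measurable (borel \<Otimes>\<^sub>M N)"
    and indep: "indep_vars (\<lambda>_. N) (\<lambda>(i, s, k). \<xi> i s k) UNIV"
    and unbiased: "\<And>i s k. k < E \<Longrightarrow> AE \<omega> in M.
          (\<integral>y. g i (fed_wt p g \<beta> E \<gamma> w0 (\<lambda>i s k. \<xi> i s k \<omega>) s k i) y \<partial>(distr M N (\<xi> i s k)))
            = gradF i (fed_wt p g \<beta> E \<gamma> w0 (\<lambda>i s k. \<xi> i s k \<omega>) s k i)"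
    and variance: "\<And>i s k. k < E \<Longrightarrow>
          (\<integral>\<^sup>+\<omega>. ennreal ((norm (g i (fed_wt p g \<beta> E \<gamma> w0 (\<lambda>i s k. \<xi> i s k \<omega>) s k i) (\<xi> i s k \<omega>)
              - gradF i (fed_wt p g \<beta> E \<gamma> w0 (\<lambda>i s k. \<xi> i s k \<omega>) s k i)))\<^sup>2) \<partial>M) \<le> ennreal (\<sigma>\<^sup>2)"
    and second_moment: "\<And>i s k. k < E \<Longrightarrow>
          (\<integral>\<^sup>+\<omega>. ennreal ((norm (g i (fed_wt p g \<beta> E \<gamma> w0 (\<lambda>i s k. \<xi> i s k \<omega>) s k i) (\<xi> i s k \<omega>)))\<^sup>2) \<partial>M)
            \<le> ennreal (Gb\<^sup>2)"
begin

definition "X0 s \<omega> = fst (fed_state p g \<beta> E \<gamma> w0 (\<lambda>i s k. \<xi> i s k \<omega>) s)"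
definition "U s i \<omega> = snd (fed_state p g \<beta> E \<gamma> w0 (\<lambda>i s k. \<xi> i s k \<omega>) s) i"
definition "W s k i \<omega> = fed_w p g \<beta> E \<gamma> w0 (\<lambda>i s k. \<xi> i s k \<omega>) s k i"
definition "Wt s k i \<omega> = fed_wt p g \<beta> E \<gamma> w0 (\<lambda>i s k. \<xi> i s k \<omega>) s k i"
definition "Gs s k i \<omega> = g i (Wt s k i \<omega>) (\<xi> i s k \<omega>)"
definition "Wb s k \<omega> = fed_wbar p g \<beta> E \<gamma> w0 (\<lambda>i s k. \<xi> i s k \<omega>) s k"

lemma sum_pw: "(\<Sum>i\<in>UNIV. pw p i) = 1"
  using p_sum by (simp add: pw_def)

lemma pw_nonneg: "0 \<le> pw p i" using pw_pos[of i] by simp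

lemma Wt_eq: "Wt s k i \<omega> = \<beta> *\<^sub>R W s k i \<omega> + (1 - \<beta>) *\<^sub>R U s i \<omega>"
  by (simp add: Wt_def fed_wt_def W_def U_def)

lemma W0: "W s 0 i \<omega> = X0 s \<omega>"
  by (simp add: W_def fed_w_def X0_def)

lemma WSuc: "W s (Suc k) i \<omega> = W s k i \<omega> - \<gamma> s *\<^sub>R Gs s k i \<omega>"
  by (simp add: W_def fed_w_def Gs_def Wt_def fed_wt_def)

lemma X0_0: "X0 0 \<omega> = w0" by (simp add: X0_def)
lemma U_0: "U 0 i \<omega> = w0" by (simp add: U_def)

lemma X0_Suc: "X0 (Suc s) \<omega> = (\<Sum>i\<in>UNIV. pw p i *\<^sub>R W s E i \<omega>)"
  by (simp add: X0_def W_def fed_w_def Let_def case_prod_beta)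

lemma U_Suc: "U (Suc s) i \<omega> = (1 / pw p i) *\<^sub>R (\<Sum>n\<in>UNIV. p i n *\<^sub>R W s E n \<omega>)"
  by (simp add: U_def W_def fed_w_def Let_def case_prod_beta)

lemma Wb_eq: "Wb s k \<omega> = (\<Sum>i\<in>UNIV. pw p i *\<^sub>R W s k i \<omega>)"
  by (simp add: Wb_def fed_wbar_def W_def)

lemma Wb0: "Wb s 0 \<omega> = X0 s \<omega>"
  by (simp add: Wb_eq W0 scaleR_sum_left[symmetric] sum_pw)

lemma WbSuc: "Wb s (Suc k) \<omega> = Wb s k \<omega> - \<gamma> s *\<^sub>R (\<Sum>i\<in>UNIV. pw p i *\<^sub>R Gs s k i \<omega>)"
  by (simp add: Wb_eq WSuc scaleR_diff_right sum_subtractf scaleR_sum_right mult.commute)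

lemma Wb_next: "Wb (Suc s) 0 \<omega> = Wb s E \<omega>"
  by (simp only: Wb0 X0_Suc Wb_eq[of s E])

subsection \<open>Sub-sigma-algebras generated by the past\<close>

definition "Ev idx = {(\<lambda>(i, s, k). \<xi> i s k) idx -` A \<inter> space M | A. A \<in> sets N}"
definition "Mp I = sigma (space M) (\<Union>idx\<in>I. Ev idx)"
definition Pst :: "nat \<Rightarrow> nat \<Rightarrow> ('c \<times> nat \<times> nat) set" where
  "Pst s k = {x. fst (snd x) < s \<or> (fst (snd x) = s \<and> snd (snd x) < k)}"

lemma Ev_Pow: "(\<Union>idx\<in>I. Ev idx) \<subseteq> Pow (space M)"
  unfolding Ev_def by auto

lemma Ev_sets: "(\<Union>idx\<in>I. Ev idx) \<subseteq> sets M"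
  unfolding Ev_def using \<xi>_meas by (auto split: prod.splits intro: measurable_sets)

lemma space_Mp[simp]: "space (Mp I) = space M"
  unfolding Mp_def using Ev_Pow by (rule space_measure_of)

lemma sets_Mp: "sets (Mp I) = sigma_sets (space M) (\<Union>idx\<in>I. Ev idx)"
  unfolding Mp_def using Ev_Pow by (rule sets_measure_of)

lemma subalg_Mp: "subalgebra M (Mp I)"
  unfolding subalgebra_def using sets.sigma_sets_subset[OF Ev_sets[of I]] by (simp add: sets_Mp)

lemma Mp_M: "f \<in> measurable (Mp I) X \<Longrightarrow> f \<in> measurable M X"
  by (rule measurable_from_subalg[OF subalg_Mp])

lemma Mp_mono: "I \<subseteq> J \<Longrightarrow> f \<in> measurable (Mp I) X \<Longrightarrow> f \<in> measurable (Mp J) X"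
proof -
  assume IJ: "I \<subseteq> J" and f: "f \<in> measurable (Mp I) X"
  have "sets (Mp I) \<subseteq> sets (Mp J)" unfolding sets_Mp
    using IJ by (intro sigma_sets_subseteq) auto
  then show ?thesis using f unfolding measurable_def by auto
qed

lemma \<xi>_Mp: "(i, s, k) \<in> I \<Longrightarrow> \<xi> i s k \<in> measurable (Mp I) N"
proof (rule measurableI)
  fix \<omega> assume "\<omega> \<in> space (Mp I)"
  then show "\<xi> i s k \<omega> \<in> space N" using \<xi>_meas[of i s k] by (auto intro: measurable_space)
next
  fix A assume A: "A \<in> sets N" and I: "(i, s, k) \<in> I"
  have "\<xi> i s k -` A \<inter> space M \<in> Ev (i, s, k)" unfolding Ev_def using A by auto
  then have "\<xi> i s k -` A \<inter> space M \<in> (\<Union>idx\<in>I. Ev idx)" using I by auto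
  then show "\<xi> i s k -` A \<inter> space (Mp I) \<in> sets (Mp I)" unfolding sets_Mp by auto
qed

lemma Pst_mono: "Pst s k \<subseteq> Pst s (Suc k)" unfolding Pst_def by auto
lemma Pst_E: "Pst s E \<subseteq> Pst (Suc s) 0" unfolding Pst_def by auto
lemma Pst_0: "Pst s 0 \<subseteq> Pst s k" unfolding Pst_def by auto
lemma Pst_in: "(i, s, k) \<in> Pst s (Suc k)" unfolding Pst_def by auto
lemma Pst_notin: "(i, s, k) \<notin> Pst s k" unfolding Pst_def by auto

lemma W_meas_aux:
  assumes X: "X0 s \<in> borel_measurable (Mp I)" and Um: "\<And>i. U s i \<in> borel_measurable (Mp I)"
    and P: "Pst s k \<subseteq> I"
  shows "W s k i \<in> borel_measurable (Mp I)"
  using P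
proof (induction k arbitrary: i)
  case 0
  then show ?case using X by (simp add: W0[abs_def])
next
  case (Suc k)
  have P': "Pst s k \<subseteq> I" using Suc.prems Pst_mono by blast
  have Wk: "W s k i \<in> borel_measurable (Mp I)" by (rule Suc.IH[OF P'])
  have Wtm: "Wt s k i \<in> borel_measurable (Mp I)"
    unfolding Wt_eq[abs_def] using Wk Um[of i] by measurable
  have xm: "\<xi> i s k \<in> measurable (Mp I) N" using Suc.prems Pst_in[of i s k] by (intro \<xi>_Mp) blast
  have "Gs s k i \<in> borel_measurable (Mp I)"
    using measurable_compose[OF measurable_Pair[OF Wtm xm] g_meas[of i]] by (simp add: Gs_def[abs_def])
  then show ?case unfolding WSuc[abs_def] using Wk by measurable
qed

lemma state_meas:
  "Pst s 0 \<subseteq> I \<Longrightarrow> X0 s \<in> borel_measurable (Mp I) \<and> (\<forall>i. U s i \<in> borel_measurable (Mp I))"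
proof (induction s)
  case 0
  then show ?case by (simp add: X0_0[abs_def] U_0[abs_def])
next
  case (Suc s)
  have P0: "Pst s 0 \<subseteq> I" using Suc.prems Pst_0[of s E] Pst_E[of s] by blast
  have PE: "Pst s E \<subseteq> I" using Suc.prems Pst_E[of s] by blast
  from Suc.IH[OF P0] have IH: "X0 s \<in> borel_measurable (Mp I)" "\<And>i. U s i \<in> borel_measurable (Mp I)" by auto
  have Wm: "\<And>i. W s E i \<in> borel_measurable (Mp I)" by (rule W_meas_aux[OF IH PE])
  have "X0 (Suc s) \<in> borel_measurable (Mp I)"
    unfolding X0_Suc[abs_def] using Wm by measurable
  moreover have "U (Suc s) i \<in> borel_measurable (Mp I)" for i
    unfolding U_Suc[abs_def] using Wm by measurable
  ultimately show ?case by auto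
qed

lemma W_meas: "Pst s k \<subseteq> I \<Longrightarrow> W s k i \<in> borel_measurable (Mp I)"
  using state_meas[of s I] Pst_0[of s k] W_meas_aux[of s I k i] by blast

lemma U_meas: "Pst s k \<subseteq> I \<Longrightarrow> U s i \<in> borel_measurable (Mp I)"
  using state_meas[of s I] Pst_0[of s k] by blast

lemma X0_meas: "Pst s k \<subseteq> I \<Longrightarrow> X0 s \<in> borel_measurable (Mp I)"
  using state_meas[of s I] Pst_0[of s k] by blast

lemma Wt_meas: "Pst s k \<subseteq> I \<Longrightarrow> Wt s k i \<in> borel_measurable (Mp I)"
  unfolding Wt_eq[abs_def] using W_meas[of s k I i] U_meas[of s k I i] by measurable

lemma Wb_meas: "Pst s k \<subseteq> I \<Longrightarrow> Wb s k \<in> borel_measurable (Mp I)"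
  unfolding Wb_eq[abs_def] using W_meas[of s k I] by measurable

lemma Gs_meas: "Pst s k \<subseteq> I \<Longrightarrow> (i, s, k) \<in> I \<Longrightarrow> Gs s k i \<in> borel_measurable (Mp I)"
proof -
  assume P: "Pst s k \<subseteq> I" and i: "(i, s, k) \<in> I"
  have "\<xi> i s k \<in> measurable (Mp I) N" using i by (rule \<xi>_Mp)
  from measurable_compose[OF measurable_Pair[OF Wt_meas[OF P] this] g_meas[of i]]
  show ?thesis by (simp add: Gs_def[abs_def])
qed

lemma Gs_measM: "Gs s k i \<in> borel_measurable M"
  by (rule Mp_M[OF Gs_meas[of s k UNIV]]) auto
lemma W_measM: "W s k i \<in> borel_measurable M"
  by (rule Mp_M[OF W_meas[of s k UNIV]]) auto
lemma U_measM: "U s i \<in> borel_measurable M"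
  by (rule Mp_M[OF U_meas[of s 0 UNIV]]) auto
lemma X0_measM: "X0 s \<in> borel_measurable M"
  by (rule Mp_M[OF X0_meas[of s 0 UNIV]]) auto
lemma Wt_measM: "Wt s k i \<in> borel_measurable M"
  by (rule Mp_M[OF Wt_meas[of s k UNIV]]) auto
lemma Wb_measM: "Wb s k \<in> borel_measurable M"
  by (rule Mp_M[OF Wb_meas[of s k UNIV]]) auto

subsection \<open>Independence of the current noise from the past\<close>

lemma indep_Mp:
  fixes Z :: "'b \<Rightarrow> 'a \<times> 'a"
  assumes idx: "(j, s, k) \<notin> I" and Z: "Z \<in> measurable (Mp I) borel"
    and A: "A \<in> sets borel" and B: "B \<in> sets N"
  shows "prob ((Z -` A \<inter> space M) \<inter> (\<xi> j s k -` B \<inter> space M))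
       = prob (Z -` A \<inter> space M) * prob (\<xi> j s k -` B \<inter> space M)"
proof -
  have iE: "indep_sets Ev UNIV"
  proof (rule indep_sets_mono_sets)
    show "indep_sets (\<lambda>idx. sigma_sets (space M) (Ev idx)) UNIV"
      using indep unfolding indep_vars_def Ev_def by auto
  qed auto
  define I' where "I' = case_bool I {(j, s, k)}"
  have "indep_sets (\<lambda>b. sigma_sets (space M) (\<Union>i\<in>I' b. Ev i)) UNIV"
  proof (rule indep_sets_collect_sigma)
    show "indep_sets Ev (\<Union>b\<in>UNIV. I' b)" by (rule indep_sets_mono_index[OF _ iE]) auto
    fix i b assume "b \<in> (UNIV :: bool set)" "i \<in> I' b"
    show "Int_stable (Ev i)"
      unfolding Ev_def
    proof (safe intro!: Int_stableI)
      fix A B assume "A \<in> sets N" "B \<in> sets N"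
      then show "\<exists>C. ((\<lambda>(i, s, k). \<xi> i s k) i -` A \<inter> space M) \<inter> ((\<lambda>(i, s, k). \<xi> i s k) i -` B \<inter> space M)
          = ((\<lambda>(i, s, k). \<xi> i s k) i -` C \<inter> space M) \<and> C \<in> sets N"
        by (intro exI[of _ "A \<inter> B"]) auto
    qed
  next
    show "disjoint_family_on I' UNIV"
      using idx unfolding I'_def disjoint_family_on_def by (auto split: bool.splits)
  qed
  moreover have "(\<lambda>b. sigma_sets (space M) (\<Union>i\<in>I' b. Ev i))
      = case_bool (sigma_sets (space M) (\<Union>i\<in>I. Ev i)) (sigma_sets (space M) (Ev (j, s, k)))"
    unfolding I'_def by (auto simp: fun_eq_iff split: bool.splits)
  ultimately have ind: "indep_set (sigma_sets (space M) (\<Union>i\<in>I. Ev i)) (sigma_sets (space M) (Ev (j, s, k)))"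
    unfolding indep_set_def by simp
  have a: "Z -` A \<inter> space M \<in> sigma_sets (space M) (\<Union>i\<in>I. Ev i)"
    using measurable_sets[OF Z A] by (simp add: sets_Mp)
  have b: "\<xi> j s k -` B \<inter> space M \<in> sigma_sets (space M) (Ev (j, s, k))"
    using B unfolding Ev_def by auto
  show ?thesis by (rule indep_setD[OF ind a b])
qed

end


context fedl begin

definition sq :: "('b \<Rightarrow> 'a) \<Rightarrow> bool" where
  "sq f \<longleftrightarrow> f \<in> borel_measurable M \<and> integrable M (\<lambda>\<omega>. (norm (f \<omega>))\<^sup>2)"

lemma sqD: "sq f \<Longrightarrow> f \<in> borel_measurable M" "sq f \<Longrightarrow> integrable M (\<lambda>\<omega>. (norm (f \<omega>))\<^sup>2)"
  by (auto simp: sq_def)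

lemma sq_const: "sq (\<lambda>_. c)" by (simp add: sq_def)

lemma sq_add: "sq f \<Longrightarrow> sq h \<Longrightarrow> sq (\<lambda>\<omega>. f \<omega> + h \<omega>)"
  unfolding sq_def using L2_add by auto

lemma sq_scale: "sq f \<Longrightarrow> sq (\<lambda>\<omega>. c *\<^sub>R f \<omega>)"
  unfolding sq_def using L2_scale by auto

lemma sq_diff: "sq f \<Longrightarrow> sq h \<Longrightarrow> sq (\<lambda>\<omega>. f \<omega> - h \<omega>)"
  using sq_add[of f "\<lambda>\<omega>. (-1) *\<^sub>R h \<omega>"] sq_scale[of h "-1"] by simp

lemma sq_sum: "finite S \<Longrightarrow> (\<And>i. i \<in> S \<Longrightarrow> sq (f i)) \<Longrightarrow> sq (\<lambda>\<omega>. \<Sum>i\<in>S. f i \<omega>)"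
proof (induction S rule: finite_induct)
  case empty then show ?case by (simp add: sq_const)
next
  case (insert x F)
  then show ?case using sq_add[of "f x" "\<lambda>\<omega>. \<Sum>i\<in>F. f i \<omega>"] by simp
qed

lemma sq_inner: "sq f \<Longrightarrow> sq h \<Longrightarrow> integrable M (\<lambda>\<omega>. f \<omega> \<bullet> h \<omega>)"
  unfolding sq_def using L2_inner by auto

lemma sq_int: "sq f \<Longrightarrow> integrable M (\<lambda>\<omega>. (norm (f \<omega>))\<^sup>2)"
  by (simp add: sq_def)

lemma gradF_cont: "continuous_on UNIV (gradF i)"
proof (rule lipschitz_on_continuous_on)
  show "L-lipschitz_on UNIV (gradF i)"
    unfolding lipschitz_on_def using L_pos smooth by (auto simp: dist_norm)
qed

lemma gradF_bm: "gradF i \<in> borel_measurable borel"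
  by (rule borel_measurable_continuous_onI[OF gradF_cont])

lemma Fl_cont: "continuous_on UNIV (Fl i)"
  using grad[of i] by (intro continuous_at_imp_continuous_on) (auto intro: has_derivative_continuous)

lemma Fl_bm: "Fl i \<in> borel_measurable borel"
  by (rule borel_measurable_continuous_onI[OF Fl_cont])

lemma sq_grad: "sq f \<Longrightarrow> sq (\<lambda>\<omega>. gradF i (f \<omega>))"
proof -
  assume f: "sq f"
  have m: "(\<lambda>\<omega>. gradF i (f \<omega>)) \<in> borel_measurable M"
    using measurable_compose[OF sqD(1)[OF f] gradF_bm] by (simp add: comp_def)
  have d: "sq (\<lambda>\<omega>. f \<omega> - w0)" by (rule sq_diff[OF f sq_const])
  have "integrable M (\<lambda>\<omega>. 2 * ((norm (gradF i w0))\<^sup>2 + L\<^sup>2 * (norm (f \<omega> - w0))\<^sup>2))"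
    using sqD(2)[OF d] by simp
  then have "integrable M (\<lambda>\<omega>. (norm (gradF i (f \<omega>)))\<^sup>2)"
  proof (rule Bochner_Integration.integrable_bound)
    show "(\<lambda>\<omega>. (norm (gradF i (f \<omega>)))\<^sup>2) \<in> borel_measurable M" using m by measurable
    show "AE \<omega> in M. norm ((norm (gradF i (f \<omega>)))\<^sup>2) \<le> norm (2 * ((norm (gradF i w0))\<^sup>2 + L\<^sup>2 * (norm (f \<omega> - w0))\<^sup>2))"
    proof (intro AE_I2)
      fix \<omega>
      have "(norm (gradF i (f \<omega>)))\<^sup>2 = (norm (gradF i w0 + (gradF i (f \<omega>) - gradF i w0)))\<^sup>2" by simp
      also have "\<dots> \<le> 2 * ((norm (gradF i w0))\<^sup>2 + (norm (gradF i (f \<omega>) - gradF i w0))\<^sup>2)" by (rule sq2)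
      also have "(norm (gradF i (f \<omega>) - gradF i w0))\<^sup>2 \<le> (L * norm (f \<omega> - w0))\<^sup>2"
        using smooth[of i "f \<omega>" w0] by (intro power_mono) auto
      finally show "norm ((norm (gradF i (f \<omega>)))\<^sup>2) \<le> norm (2 * ((norm (gradF i w0))\<^sup>2 + L\<^sup>2 * (norm (f \<omega> - w0))\<^sup>2))"
        by (simp add: power_mult_distrib)
    qed
  qed
  with m show ?thesis by (simp add: sq_def)
qed

lemma int_Fl: "sq f \<Longrightarrow> integrable M (\<lambda>\<omega>. Fl i (f \<omega>))"
proof -
  assume f: "sq f"
  have m: "(\<lambda>\<omega>. Fl i (f \<omega>)) \<in> borel_measurable M"
    using measurable_compose[OF sqD(1)[OF f] Fl_bm] by (simp add: comp_def)
  have d: "sq (\<lambda>\<omega>. f \<omega> - w0)" by (rule sq_diff[OF f sq_const])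
  have i1: "integrable M (\<lambda>\<omega>. norm (f \<omega> - w0))"
    using L2_L1[OF sqD(1)[OF d] sqD(2)[OF d]] by (rule integrable_norm)
  have "integrable M (\<lambda>\<omega>. \<bar>Fl i w0\<bar> + norm (gradF i w0) * norm (f \<omega> - w0) + L / 2 * (norm (f \<omega> - w0))\<^sup>2)"
    using i1 sqD(2)[OF d] by simp
  then show ?thesis
  proof (rule Bochner_Integration.integrable_bound)
    show "(\<lambda>\<omega>. Fl i (f \<omega>)) \<in> borel_measurable M" by (rule m)
    show "AE \<omega> in M. norm (Fl i (f \<omega>)) \<le> norm (\<bar>Fl i w0\<bar> + norm (gradF i w0) * norm (f \<omega> - w0) + L / 2 * (norm (f \<omega> - w0))\<^sup>2)"
    proof (intro AE_I2)
      fix \<omega>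
      have a: "\<bar>Fl i (f \<omega>) - Fl i w0 - gradF i w0 \<bullet> (f \<omega> - w0)\<bar> \<le> L / 2 * (norm (f \<omega> - w0))\<^sup>2"
        by (rule descent_two_sided[OF grad smooth])
      have b: "\<bar>gradF i w0 \<bullet> (f \<omega> - w0)\<bar> \<le> norm (gradF i w0) * norm (f \<omega> - w0)"
        by (rule Cauchy_Schwarz_ineq2)
      have c: "0 \<le> L / 2 * (norm (f \<omega> - w0))\<^sup>2" using L_pos by simp
      have "\<bar>Fl i (f \<omega>)\<bar> \<le> \<bar>Fl i w0\<bar> + norm (gradF i w0) * norm (f \<omega> - w0) + L / 2 * (norm (f \<omega> - w0))\<^sup>2"
        using a b by linarith
      then show "norm (Fl i (f \<omega>)) \<le> norm (\<bar>Fl i w0\<bar> + norm (gradF i w0) * norm (f \<omega> - w0) + L / 2 * (norm (f \<omega> - w0))\<^sup>2)"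
        using c by simp
    qed
  qed
qed

lemma nn_bound:
  fixes f :: "'b \<Rightarrow> real"
  assumes m: "f \<in> borel_measurable M" and nn: "\<And>\<omega>. 0 \<le> f \<omega>"
    and b: "(\<integral>\<^sup>+\<omega>. ennreal (f \<omega>) \<partial>M) \<le> ennreal c" and c: "0 \<le> c"
  shows "integrable M f" "integral\<^sup>L M f \<le> c"
proof -
  show i: "integrable M f"
    using m nn b by (intro integrableI_nonneg) (auto simp: top_unique intro: le_less_trans)
  have "ennreal (integral\<^sup>L M f) \<le> ennreal c"
    using nn_integral_eq_integral[OF i] nn b by simp
  then show "integral\<^sup>L M f \<le> c" using c by simp
qed

lemma Gs_bound:
  assumes "k < E"
  shows "sq (Gs s k i)" "(\<integral>\<omega>. (norm (Gs s k i \<omega>))\<^sup>2 \<partial>M) \<le> Gb\<^sup>2"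
proof -
  have b: "(\<integral>\<^sup>+\<omega>. ennreal ((norm (Gs s k i \<omega>))\<^sup>2) \<partial>M) \<le> ennreal (Gb\<^sup>2)"
    using second_moment[OF assms, of i s] by (simp add: Gs_def Wt_def)
  have m: "(\<lambda>\<omega>. (norm (Gs s k i \<omega>))\<^sup>2) \<in> borel_measurable M" using Gs_measM by measurable
  from nn_bound[OF m _ b] show "sq (Gs s k i)" "(\<integral>\<omega>. (norm (Gs s k i \<omega>))\<^sup>2 \<partial>M) \<le> Gb\<^sup>2"
    using Gs_measM by (auto simp: sq_def)
qed

lemma Var_bound:
  assumes "k < E"
  shows "(\<integral>\<omega>. (norm (Gs s k i \<omega> - gradF i (Wt s k i \<omega>)))\<^sup>2 \<partial>M) \<le> \<sigma>\<^sup>2"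
proof -
  have b: "(\<integral>\<^sup>+\<omega>. ennreal ((norm (Gs s k i \<omega> - gradF i (Wt s k i \<omega>)))\<^sup>2) \<partial>M) \<le> ennreal (\<sigma>\<^sup>2)"
    using variance[OF assms, of i s] by (simp add: Gs_def Wt_def)
  have "(\<lambda>\<omega>. gradF i (Wt s k i \<omega>)) \<in> borel_measurable M"
    using measurable_compose[OF Wt_measM gradF_bm] by (simp add: comp_def)
  then have m: "(\<lambda>\<omega>. (norm (Gs s k i \<omega> - gradF i (Wt s k i \<omega>)))\<^sup>2) \<in> borel_measurable M"
    using Gs_measM by measurable
  from nn_bound[OF m _ b] show ?thesis by simp
qed

lemma sq_W_aux:
  assumes X: "sq (X0 s)" and Us: "\<And>i. sq (U s i)"
  shows "k \<le> E \<Longrightarrow> sq (W s k i)"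
proof (induction k arbitrary: i)
  case 0 then show ?case using X by (simp add: W0[abs_def])
next
  case (Suc k)
  have "sq (W s k i)" using Suc by simp
  moreover have "sq (Gs s k i)" using Suc.prems by (intro Gs_bound) simp
  ultimately show ?case unfolding WSuc[abs_def] by (intro sq_diff sq_scale)
qed

lemma sq_state: "sq (X0 s) \<and> (\<forall>i. sq (U s i))"
proof (induction s)
  case 0 then show ?case by (simp add: X0_0[abs_def] U_0[abs_def] sq_const)
next
  case (Suc s)
  have W: "\<And>i. sq (W s E i)" using Suc sq_W_aux by auto
  have "sq (X0 (Suc s))" unfolding X0_Suc[abs_def] using W by (intro sq_sum sq_scale) auto
  moreover have "sq (U (Suc s) i)" for i unfolding U_Suc[abs_def] using W by (intro sq_sum sq_scale) auto
  ultimately show ?case by auto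
qed

lemma sq_X0: "sq (X0 s)" using sq_state by auto
lemma sq_U: "sq (U s i)" using sq_state by auto
lemma sq_W: "k \<le> E \<Longrightarrow> sq (W s k i)" using sq_W_aux sq_X0 sq_U by auto
lemma sq_Wt: "k \<le> E \<Longrightarrow> sq (Wt s k i)"
  unfolding Wt_eq[abs_def] using sq_W sq_U by (intro sq_add sq_scale) auto
lemma sq_Wb: "k \<le> E \<Longrightarrow> sq (Wb s k)"
  unfolding Wb_eq[abs_def] using sq_W by (intro sq_sum sq_scale) auto

end


lemma norm_sq_scale: "(norm (c *\<^sub>R (v::'v::real_normed_vector)))\<^sup>2 = c\<^sup>2 * (norm v)\<^sup>2"
  by (simp add: power_mult_distrib)

context fedl begin

lemma W_dev_eq: "W s k i \<omega> - X0 s \<omega> = - (\<gamma> s *\<^sub>R (\<Sum>j<k. Gs s j i \<omega>))"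
proof (induction k)
  case 0 then show ?case by (simp add: W0)
next
  case (Suc k)
  have "W s (Suc k) i \<omega> - X0 s \<omega> = (W s k i \<omega> - X0 s \<omega>) - \<gamma> s *\<^sub>R Gs s k i \<omega>" by (simp add: WSuc)
  also have "\<dots> = - (\<gamma> s *\<^sub>R (\<Sum>j<Suc k. Gs s j i \<omega>))" unfolding Suc by (simp add: scaleR_add_right)
  finally show ?case .
qed

lemma Wdev:
  assumes kE: "k \<le> E"
  shows "(\<integral>\<omega>. (norm (W s k i \<omega> - X0 s \<omega>))\<^sup>2 \<partial>M) \<le> (\<gamma> s)\<^sup>2 * (real E)\<^sup>2 * Gb\<^sup>2"
proof -
  have ij: "\<And>j. j \<in> {..<k} \<Longrightarrow> integrable M (\<lambda>\<omega>. (norm (Gs s j i \<omega>))\<^sup>2)"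
    using kE by (intro sq_int Gs_bound) auto
  have iR: "integrable M (\<lambda>\<omega>. (\<gamma> s)\<^sup>2 * (real k * (\<Sum>j<k. (norm (Gs s j i \<omega>))\<^sup>2)))"
    using ij by (intro integrable_mult_right integrable_sum) auto
  have iL: "integrable M (\<lambda>\<omega>. (norm (W s k i \<omega> - X0 s \<omega>))\<^sup>2)"
    using kE by (intro sq_int sq_diff sq_W sq_X0)
  have "(\<integral>\<omega>. (norm (W s k i \<omega> - X0 s \<omega>))\<^sup>2 \<partial>M)
      \<le> (\<integral>\<omega>. (\<gamma> s)\<^sup>2 * (real k * (\<Sum>j<k. (norm (Gs s j i \<omega>))\<^sup>2)) \<partial>M)"
  proof (rule integral_mono[OF iL iR])
    fix \<omega>
    have "(norm (W s k i \<omega> - X0 s \<omega>))\<^sup>2 = (\<gamma> s)\<^sup>2 * (norm (\<Sum>j<k. Gs s j i \<omega>))\<^sup>2"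
      by (simp add: W_dev_eq power_mult_distrib)
    also have "\<dots> \<le> (\<gamma> s)\<^sup>2 * (real k * (\<Sum>j<k. (norm (Gs s j i \<omega>))\<^sup>2))"
      by (intro mult_left_mono sum_sq_le) auto
    finally show "(norm (W s k i \<omega> - X0 s \<omega>))\<^sup>2 \<le> (\<gamma> s)\<^sup>2 * (real k * (\<Sum>j<k. (norm (Gs s j i \<omega>))\<^sup>2))" .
  qed
  also have "\<dots> = (\<gamma> s)\<^sup>2 * (real k * (\<Sum>j<k. \<integral>\<omega>. (norm (Gs s j i \<omega>))\<^sup>2 \<partial>M))"
    using ij by (simp add: integral_sum)
  also have "\<dots> \<le> (\<gamma> s)\<^sup>2 * (real k * (real k * Gb\<^sup>2))"
  proof -
    have "(\<Sum>j<k. \<integral>\<omega>. (norm (Gs s j i \<omega>))\<^sup>2 \<partial>M) \<le> (\<Sum>j<k. Gb\<^sup>2)"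
      using kE by (intro sum_mono Gs_bound) auto
    then show ?thesis by (intro mult_left_mono) auto
  qed
  also have "\<dots> = (\<gamma> s)\<^sup>2 * Gb\<^sup>2 * (real k * real k)" by (simp only: mult_ac)
  also have "\<dots> \<le> (\<gamma> s)\<^sup>2 * Gb\<^sup>2 * (real E * real E)"
    using kE by (intro mult_left_mono mult_mono) auto
  also have "\<dots> = (\<gamma> s)\<^sup>2 * (real E)\<^sup>2 * Gb\<^sup>2" by (simp add: power2_eq_square mult_ac)
  finally show ?thesis .
qed

lemma sum_pin: "(\<Sum>n\<in>UNIV. p i n / pw p i) = 1"
  using pw_pos[of i] by (simp add: sum_divide_distrib[symmetric] pw_def)

lemma Udev:
  "(\<integral>\<omega>. (norm (U t i \<omega> - X0 t \<omega>))\<^sup>2 \<partial>M) \<le> (if 1 \<le> t then 4 * (\<gamma> (t - 1))\<^sup>2 * (real E)\<^sup>2 * Gb\<^sup>2 else 0)"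
proof (cases t)
  case 0
  then show ?thesis by (simp add: U_0 X0_0)
next
  case (Suc s)
  define d where "d n \<omega> = W s E n \<omega> - X0 s \<omega>" for n \<omega>
  define c where "c n = p i n / pw p i" for n
  have c_nn: "0 \<le> c n" for n unfolding c_def using p_nonneg[of i n] pw_pos[of i] by simp
  have c1: "sum c UNIV = 1" unfolding c_def by (rule sum_pin)
  have eq: "U (Suc s) i \<omega> - X0 (Suc s) \<omega> = (\<Sum>n\<in>UNIV. c n *\<^sub>R d n \<omega>) + (- (\<Sum>n\<in>UNIV. pw p n *\<^sub>R d n \<omega>))" for \<omega>
  proof -
    have "(\<Sum>n\<in>UNIV. c n *\<^sub>R d n \<omega>) = (\<Sum>n\<in>UNIV. c n *\<^sub>R W s E n \<omega>) - (\<Sum>n\<in>UNIV. c n) *\<^sub>R X0 s \<omega>"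
      unfolding d_def by (simp add: scaleR_diff_right sum_subtractf scaleR_sum_left)
    also have "(\<Sum>n\<in>UNIV. c n *\<^sub>R W s E n \<omega>) = U (Suc s) i \<omega>"
      unfolding U_Suc c_def by (simp add: scaleR_sum_right)
    finally have 1: "(\<Sum>n\<in>UNIV. c n *\<^sub>R d n \<omega>) = U (Suc s) i \<omega> - X0 s \<omega>" using c1 by simp
    have "(\<Sum>n\<in>UNIV. pw p n *\<^sub>R d n \<omega>) = X0 (Suc s) \<omega> - (\<Sum>n\<in>UNIV. pw p n) *\<^sub>R X0 s \<omega>"
      unfolding d_def X0_Suc by (simp add: scaleR_diff_right sum_subtractf scaleR_sum_left)
    then have 2: "(\<Sum>n\<in>UNIV. pw p n *\<^sub>R d n \<omega>) = X0 (Suc s) \<omega> - X0 s \<omega>" using sum_pw by simp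
    show ?thesis using 1 2 by simp
  qed
  have dint: "integrable M (\<lambda>\<omega>. (norm (d n \<omega>))\<^sup>2)" for n
    unfolding d_def by (intro sq_int sq_diff sq_W sq_X0) simp
  have dbound: "(\<integral>\<omega>. (norm (d n \<omega>))\<^sup>2 \<partial>M) \<le> (\<gamma> s)\<^sup>2 * (real E)\<^sup>2 * Gb\<^sup>2" for n
    unfolding d_def by (rule Wdev) simp
  define B where "B = (\<gamma> s)\<^sup>2 * (real E)\<^sup>2 * Gb\<^sup>2"
  have iR: "integrable M (\<lambda>\<omega>. 2 * ((\<Sum>n\<in>UNIV. c n * (norm (d n \<omega>))\<^sup>2) + (\<Sum>n\<in>UNIV. pw p n * (norm (d n \<omega>))\<^sup>2)))"
    using dint by (intro integrable_mult_right integrable_add integrable_sum) auto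
  have iL: "integrable M (\<lambda>\<omega>. (norm (U (Suc s) i \<omega> - X0 (Suc s) \<omega>))\<^sup>2)"
    by (intro sq_int sq_diff sq_U sq_X0)
  have "(\<integral>\<omega>. (norm (U (Suc s) i \<omega> - X0 (Suc s) \<omega>))\<^sup>2 \<partial>M)
     \<le> (\<integral>\<omega>. 2 * ((\<Sum>n\<in>UNIV. c n * (norm (d n \<omega>))\<^sup>2) + (\<Sum>n\<in>UNIV. pw p n * (norm (d n \<omega>))\<^sup>2)) \<partial>M)"
  proof (rule integral_mono[OF iL iR])
    fix \<omega>
    have "(norm (U (Suc s) i \<omega> - X0 (Suc s) \<omega>))\<^sup>2
        \<le> 2 * ((norm (\<Sum>n\<in>UNIV. c n *\<^sub>R d n \<omega>))\<^sup>2 + (norm (- (\<Sum>n\<in>UNIV. pw p n *\<^sub>R d n \<omega>)))\<^sup>2)"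
      unfolding eq by (rule sq2)
    also have "\<dots> \<le> 2 * ((\<Sum>n\<in>UNIV. c n * (norm (d n \<omega>))\<^sup>2) + (\<Sum>n\<in>UNIV. pw p n * (norm (d n \<omega>))\<^sup>2))"
      unfolding norm_minus_cancel
      using c_nn c1 pw_nonneg sum_pw by (intro mult_left_mono add_mono wsum_sq_le) auto
    finally show "(norm (U (Suc s) i \<omega> - X0 (Suc s) \<omega>))\<^sup>2
        \<le> 2 * ((\<Sum>n\<in>UNIV. c n * (norm (d n \<omega>))\<^sup>2) + (\<Sum>n\<in>UNIV. pw p n * (norm (d n \<omega>))\<^sup>2))" .
  qed
  also have "\<dots> = 2 * ((\<Sum>n\<in>UNIV. c n * (\<integral>\<omega>. (norm (d n \<omega>))\<^sup>2 \<partial>M)) + (\<Sum>n\<in>UNIV. pw p n * (\<integral>\<omega>. (norm (d n \<omega>))\<^sup>2 \<partial>M)))"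
    using dint by (simp add: integral_sum integrable_sum)
  also have "\<dots> \<le> 2 * ((\<Sum>n\<in>UNIV. c n * B) + (\<Sum>n\<in>UNIV. pw p n * B))"
    unfolding B_def using dbound c_nn pw_nonneg
    by (intro mult_left_mono add_mono sum_mono mult_left_mono) auto
  also have "\<dots> = 4 * B"
    using c1 sum_pw by (simp add: sum_distrib_right[symmetric])
  finally show ?thesis using Suc by (simp add: B_def)
qed

definition "Rt t = 6 * (\<gamma> t)\<^sup>2 * (real E)\<^sup>2 * Gb\<^sup>2
   + 3 * (1 - \<beta>)\<^sup>2 * (if 1 \<le> t then 4 * (\<gamma> (t - 1))\<^sup>2 * (real E)\<^sup>2 * Gb\<^sup>2 else 0)"

lemma Wbdev:
  assumes kE: "k \<le> E"
  shows "(\<integral>\<omega>. (norm (Wb t k \<omega> - Wt t k i \<omega>))\<^sup>2 \<partial>M) \<le> Rt t"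
proof -
  define B where "B = (\<gamma> t)\<^sup>2 * (real E)\<^sup>2 * Gb\<^sup>2"
  define Ud where "Ud = (if 1 \<le> t then 4 * (\<gamma> (t - 1))\<^sup>2 * (real E)\<^sup>2 * Gb\<^sup>2 else 0)"
  define d where "d n \<omega> = W t k n \<omega> - X0 t \<omega>" for n \<omega>
  have eq: "Wb t k \<omega> - Wt t k i \<omega> = (\<Sum>n\<in>UNIV. pw p n *\<^sub>R d n \<omega>) + (- \<beta>) *\<^sub>R d i \<omega>
      + (- (1 - \<beta>)) *\<^sub>R (U t i \<omega> - X0 t \<omega>)" for \<omega>
  proof -
    have "(\<Sum>n\<in>UNIV. pw p n *\<^sub>R d n \<omega>) = Wb t k \<omega> - (\<Sum>n\<in>UNIV. pw p n) *\<^sub>R X0 t \<omega>"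
      unfolding d_def Wb_eq by (simp add: scaleR_diff_right sum_subtractf scaleR_sum_left)
    then have "(\<Sum>n\<in>UNIV. pw p n *\<^sub>R d n \<omega>) = Wb t k \<omega> - X0 t \<omega>" using sum_pw by simp
    then show ?thesis unfolding Wt_eq d_def by (simp add: algebra_simps)
  qed
  have dint: "integrable M (\<lambda>\<omega>. (norm (d n \<omega>))\<^sup>2)" for n
    unfolding d_def using kE by (intro sq_int sq_diff sq_W sq_X0)
  have dbound: "(\<integral>\<omega>. (norm (d n \<omega>))\<^sup>2 \<partial>M) \<le> B" for n
    unfolding d_def B_def using kE by (rule Wdev)
  have uint: "integrable M (\<lambda>\<omega>. (norm (U t i \<omega> - X0 t \<omega>))\<^sup>2)"
    by (intro sq_int sq_diff sq_U sq_X0)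
  have iR: "integrable M (\<lambda>\<omega>. 3 * ((\<Sum>n\<in>UNIV. pw p n * (norm (d n \<omega>))\<^sup>2) + \<beta>\<^sup>2 * (norm (d i \<omega>))\<^sup>2
      + (1 - \<beta>)\<^sup>2 * (norm (U t i \<omega> - X0 t \<omega>))\<^sup>2))"
    using dint uint by (intro integrable_mult_right integrable_add integrable_sum) auto
  have iL: "integrable M (\<lambda>\<omega>. (norm (Wb t k \<omega> - Wt t k i \<omega>))\<^sup>2)"
    using kE by (intro sq_int sq_diff sq_Wb sq_Wt)
  have "(\<integral>\<omega>. (norm (Wb t k \<omega> - Wt t k i \<omega>))\<^sup>2 \<partial>M)
     \<le> (\<integral>\<omega>. 3 * ((\<Sum>n\<in>UNIV. pw p n * (norm (d n \<omega>))\<^sup>2) + \<beta>\<^sup>2 * (norm (d i \<omega>))\<^sup>2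
      + (1 - \<beta>)\<^sup>2 * (norm (U t i \<omega> - X0 t \<omega>))\<^sup>2) \<partial>M)"
  proof (rule integral_mono[OF iL iR])
    fix \<omega>
    have "(norm (Wb t k \<omega> - Wt t k i \<omega>))\<^sup>2 \<le> 3 * ((norm (\<Sum>n\<in>UNIV. pw p n *\<^sub>R d n \<omega>))\<^sup>2
        + (norm ((- \<beta>) *\<^sub>R d i \<omega>))\<^sup>2 + (norm ((- (1 - \<beta>)) *\<^sub>R (U t i \<omega> - X0 t \<omega>)))\<^sup>2)"
      unfolding eq by (rule sq3)
    also have "\<dots> = 3 * ((norm (\<Sum>n\<in>UNIV. pw p n *\<^sub>R d n \<omega>))\<^sup>2
        + \<beta>\<^sup>2 * (norm (d i \<omega>))\<^sup>2 + (1 - \<beta>)\<^sup>2 * (norm (U t i \<omega> - X0 t \<omega>))\<^sup>2)"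
      by (simp only: norm_sq_scale power2_minus)
    also have "\<dots> \<le> 3 * ((\<Sum>n\<in>UNIV. pw p n * (norm (d n \<omega>))\<^sup>2)
        + \<beta>\<^sup>2 * (norm (d i \<omega>))\<^sup>2 + (1 - \<beta>)\<^sup>2 * (norm (U t i \<omega> - X0 t \<omega>))\<^sup>2)"
      using pw_nonneg sum_pw by (intro mult_left_mono add_mono wsum_sq_le order_refl) auto
    finally show "(norm (Wb t k \<omega> - Wt t k i \<omega>))\<^sup>2 \<le> 3 * ((\<Sum>n\<in>UNIV. pw p n * (norm (d n \<omega>))\<^sup>2)
        + \<beta>\<^sup>2 * (norm (d i \<omega>))\<^sup>2 + (1 - \<beta>)\<^sup>2 * (norm (U t i \<omega> - X0 t \<omega>))\<^sup>2)" .
  qed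
  also have "\<dots> = 3 * ((\<Sum>n\<in>UNIV. pw p n * (\<integral>\<omega>. (norm (d n \<omega>))\<^sup>2 \<partial>M))
      + \<beta>\<^sup>2 * (\<integral>\<omega>. (norm (d i \<omega>))\<^sup>2 \<partial>M) + (1 - \<beta>)\<^sup>2 * (\<integral>\<omega>. (norm (U t i \<omega> - X0 t \<omega>))\<^sup>2 \<partial>M))"
    using dint uint by (simp add: integral_sum integrable_sum)
  also have "\<dots> \<le> 3 * ((\<Sum>n\<in>UNIV. pw p n * B) + 1 * B + (1 - \<beta>)\<^sup>2 * Ud)"
  proof -
    have "\<beta>\<^sup>2 \<le> 1" using beta by (simp add: power_le_one)
    moreover have "0 \<le> B" unfolding B_def by simp
    ultimately have "\<beta>\<^sup>2 * (\<integral>\<omega>. (norm (d i \<omega>))\<^sup>2 \<partial>M) \<le> 1 * B"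
      using dbound[of i] by (intro mult_mono) auto
    moreover have "(\<Sum>n\<in>UNIV. pw p n * (\<integral>\<omega>. (norm (d n \<omega>))\<^sup>2 \<partial>M)) \<le> (\<Sum>n\<in>UNIV. pw p n * B)"
      using dbound pw_nonneg by (intro sum_mono mult_left_mono) auto
    moreover have "(1 - \<beta>)\<^sup>2 * (\<integral>\<omega>. (norm (U t i \<omega> - X0 t \<omega>))\<^sup>2 \<partial>M) \<le> (1 - \<beta>)\<^sup>2 * Ud"
      unfolding Ud_def by (intro mult_left_mono Udev) auto
    ultimately show ?thesis by simp
  qed
  also have "\<dots> = Rt t"
    unfolding Rt_def B_def Ud_def using sum_pw by (simp add: sum_distrib_right[symmetric])
  finally show ?thesis .
qed

end


context fedl begin

lemma grad_Mp: "f \<in> borel_measurable (Mp I) \<Longrightarrow> (\<lambda>\<omega>. gradF i (f \<omega>)) \<in> borel_measurable (Mp I)"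
  using measurable_compose[OF _ gradF_bm[of i], of f "Mp I"] by (simp add: comp_def)

lemma orth:
  assumes kE: "k < E" and P: "Pst t k \<subseteq> I" and ni: "(i, t, k) \<notin> I"
    and Zm: "Z \<in> borel_measurable (Mp I)" and Zs: "sq Z"
  shows "(\<integral>\<omega>. (Gs t k i \<omega> - gradF i (Wt t k i \<omega>)) \<bullet> Z \<omega> \<partial>M) = 0"
proof -
  have Wm: "Wt t k i \<in> borel_measurable (Mp I)" by (rule Wt_meas[OF P])
  have pm: "(\<lambda>\<omega>. (Wt t k i \<omega>, Z \<omega>)) \<in> borel_measurable (Mp I)"
    using Wm Zm by (rule borel_measurable_Pair)
  have c: "(\<integral>\<omega>. g i (Wt t k i \<omega>) (\<xi> i t k \<omega>) \<bullet> Z \<omega> \<partial>M) = (\<integral>\<omega>. gradF i (Wt t k i \<omega>) \<bullet> Z \<omega> \<partial>M)"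
  proof (rule core[where h="g i" and gF="gradF i" and ?X1.0="Wt t k i" and ?X2.0=Z and Y="\<xi> i t k" and N=N])
    show "\<xi> i t k \<in> measurable M N" by (rule \<xi>_meas)
    show "Wt t k i \<in> borel_measurable M" by (rule Wt_measM)
    show "Z \<in> borel_measurable M" by (rule Mp_M[OF Zm])
    show "(\<lambda>(x, y). g i x y) \<in> borel_measurable (borel \<Otimes>\<^sub>M N)" by (rule g_meas)
    show "gradF i \<in> borel_measurable borel" by (rule gradF_bm)
    show "prob (((\<lambda>\<omega>. (Wt t k i \<omega>, Z \<omega>)) -` A \<inter> space M) \<inter> (\<xi> i t k -` B \<inter> space M)) =
        prob ((\<lambda>\<omega>. (Wt t k i \<omega>, Z \<omega>)) -` A \<inter> space M) * prob (\<xi> i t k -` B \<inter> space M)"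
      if "A \<in> sets borel" "B \<in> sets N" for A B
      by (rule indep_Mp[OF ni pm that])
    show "AE \<omega> in M. (\<integral>y. g i (Wt t k i \<omega>) y \<partial>distr M N (\<xi> i t k)) = gradF i (Wt t k i \<omega>)"
      using unbiased[OF kE, of i t] by (simp add: Wt_def)
    show "integrable M (\<lambda>\<omega>. (norm (g i (Wt t k i \<omega>) (\<xi> i t k \<omega>)))\<^sup>2)"
      using sq_int[OF Gs_bound(1)[OF kE, of t i]] by (simp add: Gs_def)
    show "integrable M (\<lambda>\<omega>. (norm (Z \<omega>))\<^sup>2)" by (rule sq_int[OF Zs])
  qed
  have i1: "integrable M (\<lambda>\<omega>. Gs t k i \<omega> \<bullet> Z \<omega>)"
    by (rule sq_inner[OF Gs_bound(1)[OF kE] Zs])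
  have i2: "integrable M (\<lambda>\<omega>. gradF i (Wt t k i \<omega>) \<bullet> Z \<omega>)"
    using kE by (intro sq_inner[OF _ Zs] sq_grad sq_Wt) simp
  have "(\<integral>\<omega>. (Gs t k i \<omega> - gradF i (Wt t k i \<omega>)) \<bullet> Z \<omega> \<partial>M)
      = (\<integral>\<omega>. Gs t k i \<omega> \<bullet> Z \<omega> - gradF i (Wt t k i \<omega>) \<bullet> Z \<omega> \<partial>M)"
    by (simp add: inner_diff_left)
  also have "\<dots> = 0" using i1 i2 c by (simp add: Gs_def)
  finally show ?thesis .
qed


lemma AB_bound:
  assumes kE: "k < E"
  shows "(\<integral>\<omega>. (norm ((\<Sum>i\<in>UNIV. pw p i *\<^sub>R gradF i (Wb t k \<omega>)) - (\<Sum>i\<in>UNIV. pw p i *\<^sub>R gradF i (Wt t k i \<omega>))))\<^sup>2 \<partial>M)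
     \<le> L\<^sup>2 * Rt t"
proof -
  have sd: "sq (\<lambda>\<omega>. Wb t k \<omega> - Wt t k i \<omega>)" for i using kE by (intro sq_diff sq_Wb sq_Wt) auto
  have iL: "integrable M (\<lambda>\<omega>. (norm ((\<Sum>i\<in>UNIV. pw p i *\<^sub>R gradF i (Wb t k \<omega>)) - (\<Sum>i\<in>UNIV. pw p i *\<^sub>R gradF i (Wt t k i \<omega>))))\<^sup>2)"
    using kE by (intro sq_int sq_diff sq_sum sq_scale sq_grad sq_Wb sq_Wt) auto
  have iR: "integrable M (\<lambda>\<omega>. L\<^sup>2 * (\<Sum>i\<in>UNIV. pw p i * (norm (Wb t k \<omega> - Wt t k i \<omega>))\<^sup>2))"
  proof -
    have "integrable M (\<lambda>\<omega>. pw p i * (norm (Wb t k \<omega> - Wt t k i \<omega>))\<^sup>2)" for i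
      using sq_int[OF sd[of i]] by simp
    then show ?thesis by simp
  qed
  have "(\<integral>\<omega>. (norm ((\<Sum>i\<in>UNIV. pw p i *\<^sub>R gradF i (Wb t k \<omega>)) - (\<Sum>i\<in>UNIV. pw p i *\<^sub>R gradF i (Wt t k i \<omega>))))\<^sup>2 \<partial>M)
      \<le> (\<integral>\<omega>. L\<^sup>2 * (\<Sum>i\<in>UNIV. pw p i * (norm (Wb t k \<omega> - Wt t k i \<omega>))\<^sup>2) \<partial>M)"
  proof (rule integral_mono[OF iL iR])
    fix \<omega>
    have "(\<Sum>i\<in>UNIV. pw p i *\<^sub>R gradF i (Wb t k \<omega>)) - (\<Sum>i\<in>UNIV. pw p i *\<^sub>R gradF i (Wt t k i \<omega>))
        = (\<Sum>i\<in>UNIV. pw p i *\<^sub>R (gradF i (Wb t k \<omega>) - gradF i (Wt t k i \<omega>)))"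
      by (simp add: sum_subtractf scaleR_diff_right)
    then have "(norm ((\<Sum>i\<in>UNIV. pw p i *\<^sub>R gradF i (Wb t k \<omega>)) - (\<Sum>i\<in>UNIV. pw p i *\<^sub>R gradF i (Wt t k i \<omega>))))\<^sup>2
        \<le> (\<Sum>i\<in>UNIV. pw p i * (norm (gradF i (Wb t k \<omega>) - gradF i (Wt t k i \<omega>)))\<^sup>2)"
      using pw_nonneg sum_pw by (simp add: wsum_sq_le)
    also have "\<dots> \<le> (\<Sum>i\<in>UNIV. pw p i * (L\<^sup>2 * (norm (Wb t k \<omega> - Wt t k i \<omega>))\<^sup>2))"
    proof (intro sum_mono mult_left_mono pw_nonneg)
      fix i
      have "(norm (gradF i (Wb t k \<omega>) - gradF i (Wt t k i \<omega>)))\<^sup>2 \<le> (L * norm (Wb t k \<omega> - Wt t k i \<omega>))\<^sup>2"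
        using smooth[of i] by (intro power_mono) auto
      then show "(norm (gradF i (Wb t k \<omega>) - gradF i (Wt t k i \<omega>)))\<^sup>2 \<le> L\<^sup>2 * (norm (Wb t k \<omega> - Wt t k i \<omega>))\<^sup>2"
        by (simp add: power_mult_distrib)
    qed
    also have "\<dots> = L\<^sup>2 * (\<Sum>i\<in>UNIV. pw p i * (norm (Wb t k \<omega> - Wt t k i \<omega>))\<^sup>2)"
      by (simp add: sum_distrib_left mult_ac)
    finally show "(norm ((\<Sum>i\<in>UNIV. pw p i *\<^sub>R gradF i (Wb t k \<omega>)) - (\<Sum>i\<in>UNIV. pw p i *\<^sub>R gradF i (Wt t k i \<omega>))))\<^sup>2
        \<le> L\<^sup>2 * (\<Sum>i\<in>UNIV. pw p i * (norm (Wb t k \<omega> - Wt t k i \<omega>))\<^sup>2)" .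
  qed
  also have "\<dots> = L\<^sup>2 * (\<Sum>i\<in>UNIV. pw p i * (\<integral>\<omega>. (norm (Wb t k \<omega> - Wt t k i \<omega>))\<^sup>2 \<partial>M))"
    using sd by (simp add: integral_sum sq_int)
  also have "\<dots> \<le> L\<^sup>2 * (\<Sum>i\<in>UNIV. pw p i * Rt t)"
    using kE by (intro mult_left_mono sum_mono Wbdev pw_nonneg) auto
  also have "\<dots> = L\<^sup>2 * Rt t" using sum_pw by (simp add: sum_distrib_right[symmetric])
  finally show ?thesis .
qed

end


context fedl begin

lemma step:
  assumes kE: "k < E" and gl: "\<gamma> t * L \<le> 1"
  shows "(\<integral>\<omega>. (norm (\<Sum>i\<in>UNIV. pw p i *\<^sub>R gradF i (Wb t k \<omega>)))\<^sup>2 \<partial>M)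
     \<le> 2 / \<gamma> t * ((\<integral>\<omega>. (\<Sum>i\<in>UNIV. pw p i * Fl i (Wb t k \<omega>)) \<partial>M)
                   - (\<integral>\<omega>. (\<Sum>i\<in>UNIV. pw p i * Fl i (Wb t (Suc k) \<omega>)) \<partial>M))
       + (L\<^sup>2 * Rt t + L * \<gamma> t * \<sigma>\<^sup>2 * (\<Sum>i\<in>UNIV. (pw p i)\<^sup>2))"
proof -
  define c where "c = \<gamma> t"
  have c0: "0 < c" unfolding c_def by (rule gamma_pos)
  define A where "A \<omega> = (\<Sum>i\<in>UNIV. pw p i *\<^sub>R gradF i (Wb t k \<omega>))" for \<omega>
  define B where "B \<omega> = (\<Sum>i\<in>UNIV. pw p i *\<^sub>R gradF i (Wt t k i \<omega>))" for \<omega>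
  define Dl where "Dl i \<omega> = Gs t k i \<omega> - gradF i (Wt t k i \<omega>)" for i \<omega>
  define F0 where "F0 \<omega> = (\<Sum>i\<in>UNIV. pw p i * Fl i (Wb t k \<omega>))" for \<omega>
  define F1 where "F1 \<omega> = (\<Sum>i\<in>UNIV. pw p i * Fl i (Wb t (Suc k) \<omega>))" for \<omega>
  have kE': "k \<le> E" "Suc k \<le> E" using kE by auto
  have sA: "sq A" unfolding A_def using kE' by (intro sq_sum sq_scale sq_grad sq_Wb) auto
  have sB: "sq B" unfolding B_def using kE' by (intro sq_sum sq_scale sq_grad sq_Wt) auto
  have sD: "sq (Dl i)" for i unfolding Dl_def using kE kE' by (intro sq_diff Gs_bound sq_grad sq_Wt) auto
  have iF0: "integrable M F0"
  proof -
    have "integrable M (\<lambda>\<omega>. Fl i (Wb t k \<omega>))" for i using kE' by (intro int_Fl sq_Wb) auto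
    then show ?thesis unfolding F0_def by simp
  qed
  have iF1: "integrable M F1"
  proof -
    have "integrable M (\<lambda>\<omega>. Fl i (Wb t (Suc k) \<omega>))" for i using kE' by (intro int_Fl sq_Wb) auto
    then show ?thesis unfolding F1_def by simp
  qed
  have mA: "A \<in> borel_measurable (Mp (Pst t k))"
    unfolding A_def by (intro borel_measurable_sum borel_measurable_scaleR borel_measurable_const grad_Mp Wb_meas) auto
  have mB: "B \<in> borel_measurable (Mp (Pst t k))"
    unfolding B_def by (intro borel_measurable_sum borel_measurable_scaleR borel_measurable_const grad_Mp Wt_meas) auto
  have oA: "(\<integral>\<omega>. A \<omega> \<bullet> Dl i \<omega> \<partial>M) = 0" for i
    using orth[OF kE order_refl Pst_notin mA sA] unfolding Dl_def by (simp add: inner_commute)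
  have oB: "(\<integral>\<omega>. B \<omega> \<bullet> Dl i \<omega> \<partial>M) = 0" for i
    using orth[OF kE order_refl Pst_notin mB sB] unfolding Dl_def by (simp add: inner_commute)
  have oD: "(\<integral>\<omega>. Dl i \<omega> \<bullet> Dl j \<omega> \<partial>M) = 0" if ij: "i \<noteq> j" for i j
  proof -
    define I where "I = insert (j, t, k) (Pst t k)"
    have P: "Pst t k \<subseteq> I" unfolding I_def by auto
    have ni: "(i, t, k) \<notin> I" unfolding I_def using ij Pst_notin by auto
    have "Dl j \<in> borel_measurable (Mp I)"
      unfolding Dl_def[abs_def] using Gs_meas[OF P, of j] grad_Mp[OF Wt_meas[OF P]]
      by (intro borel_measurable_diff) (auto simp: I_def)
    from orth[OF kE P ni this sD] show ?thesis unfolding Dl_def .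
  qed
  have vD: "(\<integral>\<omega>. Dl i \<omega> \<bullet> Dl i \<omega> \<partial>M) \<le> \<sigma>\<^sup>2" for i
    using Var_bound[OF kE, of t i] unfolding Dl_def by (simp add: power2_norm_eq_inner)
  define R where "R \<omega> = F0 \<omega> - c / 2 * ((norm (A \<omega>))\<^sup>2 + (norm (B \<omega>))\<^sup>2 - (norm (A \<omega> - B \<omega>))\<^sup>2)
     - c * (\<Sum>i\<in>UNIV. pw p i * (A \<omega> \<bullet> Dl i \<omega>))
     + L * c\<^sup>2 / 2 * ((norm (B \<omega>))\<^sup>2 + 2 * (\<Sum>i\<in>UNIV. pw p i * (B \<omega> \<bullet> Dl i \<omega>))
         + (\<Sum>i\<in>UNIV. \<Sum>j\<in>UNIV. pw p i * pw p j * (Dl i \<omega> \<bullet> Dl j \<omega>)))" for \<omega>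
  have pt: "F1 \<omega> \<le> R \<omega>" for \<omega>
  proof -
    define x where "x = Wb t k \<omega>"
    define S where "S = (\<Sum>i\<in>UNIV. pw p i *\<^sub>R Gs t k i \<omega>)"
    define D where "D = (\<Sum>i\<in>UNIV. pw p i *\<^sub>R Dl i \<omega>)"
    have y: "Wb t (Suc k) \<omega> = x - c *\<^sub>R S" unfolding x_def S_def c_def by (rule WbSuc)
    have SBD: "S = B \<omega> + D"
      unfolding S_def B_def D_def Dl_def by (simp add: sum.distrib[symmetric] scaleR_add_right[symmetric])
    have desc: "Fl i (x - c *\<^sub>R S) \<le> Fl i x + gradF i x \<bullet> (- (c *\<^sub>R S)) + L / 2 * (norm (c *\<^sub>R S))\<^sup>2" for i
    proof -
      have "Fl i (x - c *\<^sub>R S) - Fl i x - gradF i x \<bullet> ((x - c *\<^sub>R S) - x) \<le> L / 2 * (norm ((x - c *\<^sub>R S) - x))\<^sup>2"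
        by (rule abs_le_D1[OF descent_two_sided[OF grad smooth]])
      then show ?thesis by simp
    qed
    have "F1 \<omega> = (\<Sum>i\<in>UNIV. pw p i * Fl i (x - c *\<^sub>R S))" unfolding F1_def y ..
    also have "\<dots> \<le> (\<Sum>i\<in>UNIV. pw p i * (Fl i x + gradF i x \<bullet> (- (c *\<^sub>R S)) + L / 2 * (norm (c *\<^sub>R S))\<^sup>2))"
      using desc pw_nonneg by (intro sum_mono mult_left_mono) auto
    also have "\<dots> = F0 \<omega> - c * (A \<omega> \<bullet> S) + L * c\<^sup>2 / 2 * (norm S)\<^sup>2"
    proof -
      have "(\<Sum>i\<in>UNIV. pw p i * (Fl i x + gradF i x \<bullet> (- (c *\<^sub>R S)) + L / 2 * (norm (c *\<^sub>R S))\<^sup>2))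
          = (\<Sum>i\<in>UNIV. pw p i * Fl i x) - c * (\<Sum>i\<in>UNIV. pw p i * (gradF i x \<bullet> S))
            + (\<Sum>i\<in>UNIV. pw p i) * (L / 2 * (norm (c *\<^sub>R S))\<^sup>2)"
        by (simp add: algebra_simps sum.distrib sum_subtractf sum_distrib_left sum_distrib_right)
      moreover have "(\<Sum>i\<in>UNIV. pw p i * (gradF i x \<bullet> S)) = A \<omega> \<bullet> S"
        unfolding A_def x_def by (simp add: inner_sum_left)
      moreover have "(norm (c *\<^sub>R S))\<^sup>2 = c\<^sup>2 * (norm S)\<^sup>2" by (rule norm_sq_scale)
      ultimately show ?thesis using sum_pw unfolding F0_def x_def by simp
    qed
    also have "\<dots> = R \<omega>"
    proof -
      have AS: "A \<omega> \<bullet> S = A \<omega> \<bullet> B \<omega> + (\<Sum>i\<in>UNIV. pw p i * (A \<omega> \<bullet> Dl i \<omega>))"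
        unfolding SBD D_def by (simp add: inner_add_right inner_sum_right)
      have AB: "A \<omega> \<bullet> B \<omega> = ((norm (A \<omega>))\<^sup>2 + (norm (B \<omega>))\<^sup>2 - (norm (A \<omega> - B \<omega>))\<^sup>2) / 2"
        by (simp add: power2_norm_eq_inner inner_diff_left inner_diff_right inner_commute)
      have BD: "B \<omega> \<bullet> D = (\<Sum>i\<in>UNIV. pw p i * (B \<omega> \<bullet> Dl i \<omega>))"
        unfolding D_def by (simp add: inner_sum_right)
      have DD: "D \<bullet> D = (\<Sum>i\<in>UNIV. \<Sum>j\<in>UNIV. pw p i * pw p j * (Dl i \<omega> \<bullet> Dl j \<omega>))"
        unfolding D_def by (simp only: inner_sum_left) (simp add: inner_sum_right sum_distrib_left mult_ac)
      have SS: "(norm S)\<^sup>2 = (norm (B \<omega>))\<^sup>2 + 2 * (B \<omega> \<bullet> D) + D \<bullet> D"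
        unfolding SBD by (simp add: power2_norm_eq_inner inner_add_left inner_add_right inner_commute)
      show ?thesis unfolding R_def AS AB SS BD DD by (simp add: algebra_simps add_divide_distrib diff_divide_distrib)
    qed
    finally show ?thesis .
  qed
  have iAD: "integrable M (\<lambda>\<omega>. A \<omega> \<bullet> Dl i \<omega>)" for i by (rule sq_inner[OF sA sD])
  have iBD: "integrable M (\<lambda>\<omega>. B \<omega> \<bullet> Dl i \<omega>)" for i by (rule sq_inner[OF sB sD])
  have iDD: "integrable M (\<lambda>\<omega>. Dl i \<omega> \<bullet> Dl j \<omega>)" for i j by (rule sq_inner[OF sD sD])
  have iA: "integrable M (\<lambda>\<omega>. (norm (A \<omega>))\<^sup>2)" by (rule sq_int[OF sA])
  have iB: "integrable M (\<lambda>\<omega>. (norm (B \<omega>))\<^sup>2)" by (rule sq_int[OF sB])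
  have iAB: "integrable M (\<lambda>\<omega>. (norm (A \<omega> - B \<omega>))\<^sup>2)" by (rule sq_int[OF sq_diff[OF sA sB]])
  define EA where "EA = (\<integral>\<omega>. (norm (A \<omega>))\<^sup>2 \<partial>M)"
  define EB where "EB = (\<integral>\<omega>. (norm (B \<omega>))\<^sup>2 \<partial>M)"
  define EAB where "EAB = (\<integral>\<omega>. (norm (A \<omega> - B \<omega>))\<^sup>2 \<partial>M)"
  define V where "V = (\<Sum>i\<in>UNIV. \<Sum>j\<in>UNIV. pw p i * pw p j * (\<integral>\<omega>. Dl i \<omega> \<bullet> Dl j \<omega> \<partial>M))"
  have i1: "integrable M (\<lambda>\<omega>. \<Sum>i\<in>UNIV. pw p i * (A \<omega> \<bullet> Dl i \<omega>))" using iAD by simp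
  have i2: "integrable M (\<lambda>\<omega>. \<Sum>i\<in>UNIV. pw p i * (B \<omega> \<bullet> Dl i \<omega>))" using iBD by simp
  have i3: "integrable M (\<lambda>\<omega>. \<Sum>i\<in>UNIV. \<Sum>j\<in>UNIV. pw p i * pw p j * (Dl i \<omega> \<bullet> Dl j \<omega>))" using iDD by simp
  have e1: "(\<integral>\<omega>. (\<Sum>i\<in>UNIV. pw p i * (A \<omega> \<bullet> Dl i \<omega>)) \<partial>M) = 0"
    using iAD oA by (simp add: integral_sum)
  have e2: "(\<integral>\<omega>. (\<Sum>i\<in>UNIV. pw p i * (B \<omega> \<bullet> Dl i \<omega>)) \<partial>M) = 0"
    using iBD oB by (simp add: integral_sum)
  have e3: "(\<integral>\<omega>. (\<Sum>i\<in>UNIV. \<Sum>j\<in>UNIV. pw p i * pw p j * (Dl i \<omega> \<bullet> Dl j \<omega>)) \<partial>M) = V"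
    unfolding V_def using iDD by (simp add: integral_sum integrable_sum)
  have iR: "integrable M R" unfolding R_def using iF0 iA iB iAB i1 i2 i3 by simp
  have intR: "(\<integral>\<omega>. R \<omega> \<partial>M) = integral\<^sup>L M F0 - c / 2 * (EA + EB - EAB) - c * 0 + L * c\<^sup>2 / 2 * (EB + 2 * 0 + V)"
  proof -
    have "(\<integral>\<omega>. R \<omega> \<partial>M) = integral\<^sup>L M F0 - c / 2 * (EA + EB - EAB)
       - c * (\<integral>\<omega>. (\<Sum>i\<in>UNIV. pw p i * (A \<omega> \<bullet> Dl i \<omega>)) \<partial>M)
       + L * c\<^sup>2 / 2 * (EB + 2 * (\<integral>\<omega>. (\<Sum>i\<in>UNIV. pw p i * (B \<omega> \<bullet> Dl i \<omega>)) \<partial>M)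
         + (\<integral>\<omega>. (\<Sum>i\<in>UNIV. \<Sum>j\<in>UNIV. pw p i * pw p j * (Dl i \<omega> \<bullet> Dl j \<omega>)) \<partial>M))"
      unfolding R_def EA_def EB_def EAB_def
      using iF0 iA iB iAB i1 i2 i3 by (simp del: integral_sum' integrable_sum)
    then show ?thesis unfolding e1 e2 e3 .
  qed
  have VV: "V \<le> \<sigma>\<^sup>2 * (\<Sum>i\<in>UNIV. (pw p i)\<^sup>2)"
  proof -
    have "V = (\<Sum>i\<in>UNIV. (pw p i)\<^sup>2 * (\<integral>\<omega>. Dl i \<omega> \<bullet> Dl i \<omega> \<partial>M))"
      unfolding V_def
    proof (intro sum.cong refl)
      fix i
      have "(\<Sum>j\<in>UNIV. pw p i * pw p j * (\<integral>\<omega>. Dl i \<omega> \<bullet> Dl j \<omega> \<partial>M))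
          = (\<Sum>j\<in>UNIV. if j = i then pw p i * pw p i * (\<integral>\<omega>. Dl i \<omega> \<bullet> Dl i \<omega> \<partial>M) else 0)"
        using oD by (intro sum.cong refl) auto
      also have "\<dots> = (pw p i)\<^sup>2 * (\<integral>\<omega>. Dl i \<omega> \<bullet> Dl i \<omega> \<partial>M)"
        by (simp add: power2_eq_square)
      finally show "(\<Sum>j\<in>UNIV. pw p i * pw p j * (\<integral>\<omega>. Dl i \<omega> \<bullet> Dl j \<omega> \<partial>M)) = (pw p i)\<^sup>2 * (\<integral>\<omega>. Dl i \<omega> \<bullet> Dl i \<omega> \<partial>M)" .
    qed
    also have "\<dots> \<le> (\<Sum>i\<in>UNIV. (pw p i)\<^sup>2 * \<sigma>\<^sup>2)"
      using vD by (intro sum_mono mult_left_mono) auto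
    also have "\<dots> = \<sigma>\<^sup>2 * (\<Sum>i\<in>UNIV. (pw p i)\<^sup>2)" by (simp add: sum_distrib_left mult_ac)
    finally show ?thesis .
  qed
  have main: "integral\<^sup>L M F1 \<le> integral\<^sup>L M F0 - c / 2 * (EA + EB - EAB) + L * c\<^sup>2 / 2 * (EB + V)"
  proof -
    have "integral\<^sup>L M F1 \<le> (\<integral>\<omega>. R \<omega> \<partial>M)" by (rule integral_mono[OF iF1 iR pt])
    then show ?thesis unfolding intR by simp
  qed
  have EB0: "0 \<le> EB" unfolding EB_def by simp
  have EABb: "EAB \<le> L\<^sup>2 * Rt t" unfolding EAB_def A_def B_def by (rule AB_bound[OF kE])
  have cL: "L * c\<^sup>2 / 2 * EB \<le> c / 2 * EB"
  proof -
    have "L * c \<le> 1" using gl unfolding c_def by (simp add: mult.commute)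
    then have "L * c * (c / 2 * EB) \<le> 1 * (c / 2 * EB)" using c0 EB0 by (intro mult_right_mono) auto
    then show ?thesis by (simp add: power2_eq_square mult_ac)
  qed
  have VL: "L * c\<^sup>2 / 2 * V \<le> L * c\<^sup>2 / 2 * (\<sigma>\<^sup>2 * (\<Sum>i\<in>UNIV. (pw p i)\<^sup>2))"
    using VV L_pos by (intro mult_left_mono) auto
  have ABL: "c / 2 * EAB \<le> c / 2 * (L\<^sup>2 * Rt t)" using EABb c0 by (intro mult_left_mono) auto
  have "c / 2 * EA \<le> integral\<^sup>L M F0 - integral\<^sup>L M F1 + c / 2 * (L\<^sup>2 * Rt t) + L * c\<^sup>2 / 2 * (\<sigma>\<^sup>2 * (\<Sum>i\<in>UNIV. (pw p i)\<^sup>2))"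
  proof -
    have "integral\<^sup>L M F0 - c / 2 * (EA + EB - EAB) + L * c\<^sup>2 / 2 * (EB + V)
        = integral\<^sup>L M F0 - c / 2 * EA - c / 2 * EB + c / 2 * EAB + L * c\<^sup>2 / 2 * EB + L * c\<^sup>2 / 2 * V"
      by (simp add: algebra_simps add_divide_distrib diff_divide_distrib)
    then show ?thesis using main cL VL ABL by linarith
  qed
  then have "EA \<le> 2 / c * (integral\<^sup>L M F0 - integral\<^sup>L M F1) + (L\<^sup>2 * Rt t + L * c * \<sigma>\<^sup>2 * (\<Sum>i\<in>UNIV. (pw p i)\<^sup>2))"
    using c0 by (simp add: field_simps power2_eq_square)
  then show ?thesis unfolding EA_def A_def F0_def F1_def c_def .
qed

end


context fedl begin

lemma final:
  assumes gl: "\<gamma> t \<le> 1 / L"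
  shows "(1 / real E) * (\<Sum>k<E. \<integral>\<omega>. (norm (\<Sum>i\<in>UNIV. pw p i *\<^sub>R gradF i (Wb t k \<omega>)))\<^sup>2 \<partial>M)
         \<le> 2 / (\<gamma> t * real E) *
             (\<integral>\<omega>. (\<Sum>i\<in>UNIV. pw p i * Fl i (Wb t 0 \<omega>))
                  - (\<Sum>i\<in>UNIV. pw p i * Fl i (Wb (Suc t) 0 \<omega>)) \<partial>M)
           + (\<gamma> t * L * \<sigma>\<^sup>2 * (\<Sum>i\<in>UNIV. (pw p i)\<^sup>2)
              + 4 * (\<gamma> t)\<^sup>2 * L\<^sup>2 * (real E)\<^sup>2 * Gb\<^sup>2 *
                (4 + (1 - \<beta>)\<^sup>2 + (if 1 \<le> t then 8 * (\<gamma> (t - 1))\<^sup>2 / (\<gamma> t)\<^sup>2 * (1 - 1 / \<beta>)\<^sup>2 else 0)))"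
proof -
  have g0: "0 < \<gamma> t" by (rule gamma_pos)
  have gl': "\<gamma> t * L \<le> 1" using gl L_pos by (simp add: field_simps)
  define I where "I k = (\<integral>\<omega>. (\<Sum>i\<in>UNIV. pw p i * Fl i (Wb t k \<omega>)) \<partial>M)" for k
  define a where "a k = (\<integral>\<omega>. (norm (\<Sum>i\<in>UNIV. pw p i *\<^sub>R gradF i (Wb t k \<omega>)))\<^sup>2 \<partial>M)" for k
  define C where "C = L\<^sup>2 * Rt t + L * \<gamma> t * \<sigma>\<^sup>2 * (\<Sum>i\<in>UNIV. (pw p i)\<^sup>2)"
  have st: "a k \<le> 2 / \<gamma> t * (I k - I (Suc k)) + C" if "k < E" for k
    unfolding a_def I_def C_def by (rule step[OF that gl'])
  have "(\<Sum>k<E. a k) \<le> (\<Sum>k<E. 2 / \<gamma> t * (I k - I (Suc k)) + C)"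
    using st by (intro sum_mono) auto
  also have "\<dots> = 2 / \<gamma> t * (I 0 - I E) + real E * C"
    by (simp only: sum.distrib sum_distrib_left[symmetric] sum_lessThan_telescope' sum_constant card_lessThan)
  finally have S: "(\<Sum>k<E. a k) \<le> 2 / \<gamma> t * (I 0 - I E) + real E * C" .
  have Epos: "0 < real E" using E_pos by simp
  have S2: "(1 / real E) * (\<Sum>k<E. a k) \<le> 2 / (\<gamma> t * real E) * (I 0 - I E) + C"
  proof -
    have "(1 / real E) * (\<Sum>k<E. a k) \<le> (1 / real E) * (2 / \<gamma> t * (I 0 - I E) + real E * C)"
      using S Epos by (intro mult_left_mono) auto
    also have "\<dots> = 2 / (\<gamma> t * real E) * (I 0 - I E) + C"
      using Epos g0 by (simp add: field_simps)
    finally show ?thesis .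
  qed
  have intdiff: "(\<integral>\<omega>. (\<Sum>i\<in>UNIV. pw p i * Fl i (Wb t 0 \<omega>)) - (\<Sum>i\<in>UNIV. pw p i * Fl i (Wb (Suc t) 0 \<omega>)) \<partial>M)
      = I 0 - I E"
  proof -
    have iF: "integrable M (\<lambda>\<omega>. \<Sum>i\<in>UNIV. pw p i * Fl i (Wb t k \<omega>))" if "k \<le> E" for k
    proof -
      have "integrable M (\<lambda>\<omega>. Fl i (Wb t k \<omega>))" for i using that by (intro int_Fl sq_Wb)
      then show ?thesis by simp
    qed
    have "(\<integral>\<omega>. (\<Sum>i\<in>UNIV. pw p i * Fl i (Wb t 0 \<omega>)) - (\<Sum>i\<in>UNIV. pw p i * Fl i (Wb (Suc t) 0 \<omega>)) \<partial>M)
        = (\<integral>\<omega>. (\<Sum>i\<in>UNIV. pw p i * Fl i (Wb t 0 \<omega>)) - (\<Sum>i\<in>UNIV. pw p i * Fl i (Wb t E \<omega>)) \<partial>M)"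
      by (simp add: Wb_next)
    also have "\<dots> = I 0 - I E" unfolding I_def using iF[of 0] iF[of E] by (simp del: integral_sum' integrable_sum)
    finally show ?thesis .
  qed
  have CA: "C \<le> \<gamma> t * L * \<sigma>\<^sup>2 * (\<Sum>i\<in>UNIV. (pw p i)\<^sup>2)
              + 4 * (\<gamma> t)\<^sup>2 * L\<^sup>2 * (real E)\<^sup>2 * Gb\<^sup>2 *
                (4 + (1 - \<beta>)\<^sup>2 + (if 1 \<le> t then 8 * (\<gamma> (t - 1))\<^sup>2 / (\<gamma> t)\<^sup>2 * (1 - 1 / \<beta>)\<^sup>2 else 0))"
  proof -
    define K where "K = L\<^sup>2 * (real E)\<^sup>2 * Gb\<^sup>2"
    define q where "q = (\<gamma> (t - 1))\<^sup>2"
    have K0: "0 \<le> K" unfolding K_def by simp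
    have q0: "0 \<le> q" unfolding q_def by simp
    have bb: "(1 - \<beta>)\<^sup>2 \<le> (1 - 1 / \<beta>)\<^sup>2"
    proof -
      have "(1 - 1 / \<beta>)\<^sup>2 = (1 - \<beta>)\<^sup>2 / \<beta>\<^sup>2" using beta by (simp add: field_simps power2_eq_square)
      moreover have b1: "\<beta>\<^sup>2 \<le> 1" using beta by (simp add: power_le_one)
      moreover have b0: "0 < \<beta>\<^sup>2" using beta by simp
      moreover have "(1 - \<beta>)\<^sup>2 * \<beta>\<^sup>2 \<le> (1 - \<beta>)\<^sup>2"
        using mult_left_mono[OF b1, of "(1 - \<beta>)\<^sup>2"] by simp
      ultimately show ?thesis by (simp add: le_divide_eq)
    qed
    have "L\<^sup>2 * Rt t = 6 * (\<gamma> t)\<^sup>2 * K + (if 1 \<le> t then 12 * (1 - \<beta>)\<^sup>2 * q * K else 0)"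
      unfolding Rt_def K_def q_def by (simp add: algebra_simps)
    also have "\<dots> \<le> 4 * (\<gamma> t)\<^sup>2 * K * (4 + (1 - \<beta>)\<^sup>2 + (if 1 \<le> t then 8 * q / (\<gamma> t)\<^sup>2 * (1 - 1 / \<beta>)\<^sup>2 else 0))"
    proof -
      have a: "6 * (\<gamma> t)\<^sup>2 * K \<le> 4 * (\<gamma> t)\<^sup>2 * K * (4 + (1 - \<beta>)\<^sup>2)"
      proof -
        have h6: "6 \<le> 4 * (4 + (1 - \<beta>)\<^sup>2)" by (simp add: add_nonneg_nonneg)
        have e1: "6 * (\<gamma> t)\<^sup>2 * K = 6 * ((\<gamma> t)\<^sup>2 * K)" by (simp only: mult.assoc)
        have e2: "4 * (\<gamma> t)\<^sup>2 * K * (4 + (1 - \<beta>)\<^sup>2) = 4 * (4 + (1 - \<beta>)\<^sup>2) * ((\<gamma> t)\<^sup>2 * K)"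
          by (simp only: mult_ac)
        show ?thesis unfolding e1 e2 using K0 h6 by (intro mult_right_mono) auto
      qed
      have b: "12 * (1 - \<beta>)\<^sup>2 * q * K \<le> 4 * (\<gamma> t)\<^sup>2 * K * (8 * q / (\<gamma> t)\<^sup>2 * (1 - 1 / \<beta>)\<^sup>2)"
      proof -
        have "4 * (\<gamma> t)\<^sup>2 * K * (8 * q / (\<gamma> t)\<^sup>2 * (1 - 1 / \<beta>)\<^sup>2) = 32 * (1 - 1 / \<beta>)\<^sup>2 * (q * K)"
          using g0 by (simp add: field_simps)
        moreover have "12 * (1 - \<beta>)\<^sup>2 * (q * K) \<le> 32 * (1 - 1 / \<beta>)\<^sup>2 * (q * K)"
        proof -
          have h: "12 * (1 - \<beta>)\<^sup>2 \<le> 32 * (1 - 1 / \<beta>)\<^sup>2"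
            using bb zero_le_power2[of "1 - \<beta>"] by linarith
          show ?thesis using q0 K0 by (intro mult_right_mono[OF h]) simp
        qed
        ultimately show ?thesis by (simp add: mult_ac)
      qed
      show ?thesis using a b by (auto simp: algebra_simps)
    qed
    finally have "L\<^sup>2 * Rt t \<le> 4 * (\<gamma> t)\<^sup>2 * K * (4 + (1 - \<beta>)\<^sup>2 + (if 1 \<le> t then 8 * q / (\<gamma> t)\<^sup>2 * (1 - 1 / \<beta>)\<^sup>2 else 0))" .
    then show ?thesis unfolding C_def K_def q_def by (simp add: mult_ac)
  qed
  show ?thesis using S2 CA unfolding intdiff a_def I_def by linarith
qed

end


theorem lemma9:
  fixes M :: "'b measure" and N :: "'n measure"
    and p :: "'c::finite \<Rightarrow> 'c \<Rightarrow> real"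
    and Fl :: "'c \<Rightarrow> 'a::euclidean_space \<Rightarrow> real"
    and gradF :: "'c \<Rightarrow> 'a \<Rightarrow> 'a"
    and g :: "'c \<Rightarrow> 'a \<Rightarrow> 'n \<Rightarrow> 'a"
    and \<xi> :: "'c \<Rightarrow> nat \<Rightarrow> nat \<Rightarrow> 'b \<Rightarrow> 'n"
    and w0 :: 'a
    and \<beta> L \<sigma> Gb f_inf :: real
    and E t :: nat and \<gamma> :: "nat \<Rightarrow> real"
  assumes M: "prob_space M"
    and p_nonneg: "\<And>i n. 0 \<le> p i n"
    and p_sym: "\<And>i n. p i n = p n i"
    and p_diag: "\<And>i. p i i = 0"
    and p_sum: "(\<Sum>i\<in>UNIV. \<Sum>n\<in>UNIV. p i n) = 1"
    and pw_pos: "\<And>i. 0 < pw p i"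
    and beta: "0 < \<beta>" "\<beta> < 1"
    and E_pos: "1 \<le> E"
    and gamma_pos: "\<And>s. 0 < \<gamma> s"
    and L_pos: "0 < L"
    and gamma_t: "\<gamma> t \<le> 1 / L"
    and grad: "\<And>i x. (Fl i has_derivative (\<lambda>h. gradF i x \<bullet> h)) (at x)"
    and smooth: "\<And>i x y. norm (gradF i x - gradF i y) \<le> L * norm (x - y)"
    and lower: "\<And>x. f_inf \<le> (\<Sum>i\<in>UNIV. pw p i * Fl i x)"
    and \<xi>_meas: "\<And>i s k. \<xi> i s k \<in> measurable M N"
    and g_meas: "\<And>i. (\<lambda>(x, y). g i x y) \<in> borel_measurable (borel \<Otimes>\<^sub>M N)"
    and indep: "prob_space.indep_vars M (\<lambda>_. N) (\<lambda>(i, s, k). \<xi> i s k) UNIV"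
    and unbiased: "\<And>i s k. k < E \<Longrightarrow> AE \<omega> in M.
          (\<integral>y. g i (fed_wt p g \<beta> E \<gamma> w0 (\<lambda>i s k. \<xi> i s k \<omega>) s k i) y \<partial>(distr M N (\<xi> i s k)))
            = gradF i (fed_wt p g \<beta> E \<gamma> w0 (\<lambda>i s k. \<xi> i s k \<omega>) s k i)"
    and variance: "\<And>i s k. k < E \<Longrightarrow>
          (\<integral>\<^sup>+\<omega>. ennreal ((norm (g i (fed_wt p g \<beta> E \<gamma> w0 (\<lambda>i s k. \<xi> i s k \<omega>) s k i) (\<xi> i s k \<omega>)
              - gradF i (fed_wt p g \<beta> E \<gamma> w0 (\<lambda>i s k. \<xi> i s k \<omega>) s k i)))\<^sup>2) \<partial>M) \<le> ennreal (\<sigma>\<^sup>2)"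
    and second_moment: "\<And>i s k. k < E \<Longrightarrow>
          (\<integral>\<^sup>+\<omega>. ennreal ((norm (g i (fed_wt p g \<beta> E \<gamma> w0 (\<lambda>i s k. \<xi> i s k \<omega>) s k i) (\<xi> i s k \<omega>)))\<^sup>2) \<partial>M)
            \<le> ennreal (Gb\<^sup>2)"
  shows "(1 / real E) * (\<Sum>k<E. \<integral>\<omega>. (norm (\<Sum>i\<in>UNIV. pw p i *\<^sub>R
              gradF i (fed_wbar p g \<beta> E \<gamma> w0 (\<lambda>i s k. \<xi> i s k \<omega>) t k)))\<^sup>2 \<partial>M)
         \<le> 2 / (\<gamma> t * real E) *
             (\<integral>\<omega>. (\<Sum>i\<in>UNIV. pw p i * Fl i (fed_wbar p g \<beta> E \<gamma> w0 (\<lambda>i s k. \<xi> i s k \<omega>) t 0))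
                  - (\<Sum>i\<in>UNIV. pw p i * Fl i (fed_wbar p g \<beta> E \<gamma> w0 (\<lambda>i s k. \<xi> i s k \<omega>) (Suc t) 0)) \<partial>M)
           + (\<gamma> t * L * \<sigma>\<^sup>2 * (\<Sum>i\<in>UNIV. (pw p i)\<^sup>2)
              + 4 * (\<gamma> t)\<^sup>2 * L\<^sup>2 * (real E)\<^sup>2 * Gb\<^sup>2 *
                (4 + (1 - \<beta>)\<^sup>2 + (if 1 \<le> t then 8 * (\<gamma> (t - 1))\<^sup>2 / (\<gamma> t)\<^sup>2 * (1 - 1 / \<beta>)\<^sup>2 else 0)))"
proof -
  have FL: "fedl M N p Fl gradF g \<xi> w0 \<beta> L \<sigma> Gb E \<gamma>"
  proof (intro fedl.intro fedl_axioms.intro)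
    show "prob_space M" by (rule M)
  qed (fact p_nonneg p_sum pw_pos beta(1) beta(2) E_pos gamma_pos L_pos grad smooth \<xi>_meas g_meas indep unbiased variance second_moment)+
  interpret F: fedl M N p Fl gradF g \<xi> w0 \<beta> L \<sigma> Gb E \<gamma> by (rule FL)
  from F.final[OF gamma_t] show ?thesis unfolding F.Wb_def .
qed

end
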